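(* Let $I\subsetneq S$ and $J=\tau(I)$. For any proper subset $X\subsetneq S$, the following are equivalent: (i) $J\subset X$; (ii) $J\subset\mathcal R(w_Ih_X)$. Moreover, in this case: (1) $\ell(w_Ih_X)=\ell(w_I)+\ell(h_X)$; (2) $w_Ih_X=h_Yw_J$ for some uniquely determined $Y\subsetneq S$; (3) $Y$ is obtained from $X$ by conjugation by the longest element within each $\tau$-component, i.e. for each $\tau$-component $A$, either $X\cap A=J\cap A$ and $Y\cap A=I\cap A$, or $X\cap A=A=Y\cap A$; (4) $\mathcal R(w_Ih_X)=J\cup\{x\in X: x-1\notin X\}$; (5) $\mathcal L(h_Yw_J)=I\cup\{y\in Y: y+1\notin Y\}$.
   Context: $(W,S)$ is the affine Weyl group of type $\tilde A_{n-1}$ ($n\ge2$), with $S=\{s_i:i\in\mathbb Z/n\mathbb Z\}$ identified with $\mathbb Z/n\mathbb Z$, and $\tau(s_i)=s_{i+1}$. For $X\subsetneq S$, choose $\aleph\in S\setminus X$, order $S$ as $\aleph<\aleph+1<\dots<\aleph-1$, write $X=\{x_1<\dots<x_d\}$ and set $h_X=s_{x_d}\cdots s_{x_1}$ (independent of the choice of $\aleph$). For $I\subsetneq S$, $w_I$ is the longest element of the finite parabolic subgroup $W_I$. $\mathcal L,\mathcal R$ denote left and right descent sets. The $\tau$-components of $S$ (relative to $I$) are the sets $B\cup\tau(B)$ for $B$ a connected component of $I$ in the affine Dynkin diagram (a cycle), together with the singletons $\{i\}$ for $i\in S\setminus(I\cup J)$; they partition $S$, and a $\tau$-component $A$ is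 characterized by: for $j\in A$, $j+1\in A$ iff $j\in I$, and $j-1\in A$ iff $j\in J$. *)

theory Defs
  imports Main
begin

text \<open>Model of the affine Weyl group of type affine A_(n-1): the group of
affine permutations of the integers generated by the simple reflections
s_i (i in Z/nZ, represented by 0..n-1), where s_i swaps k and k+1 for every
k congruent to i mod n.\<close>

definition Sset :: "nat \<Rightarrow> int set" where
  "Sset n = {0..<int n}"

definition sref :: "nat \<Rightarrow> int \<Rightarrow> int \<Rightarrow> int" where
  "sref n i k = (if k mod int n = i mod int n then k + 1
                 else if k mod int n = (i + 1) mod int n then k - 1 else k)"

definition word_prod :: "nat \<Rightarrow> int list \<Rightarrow> (int \<Rightarrow> int)" where
  "word_prod n ws = foldr (\<lambda>i f. sref n i \<circ> f) ws id"

definition parab :: "nat \<Rightarrow> int set \<Rightarrow> (int \<Rightarrow> int) set" where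
  "parab n I = {word_prod n ws | ws. set ws \<subseteq> I}"

definition len :: "nat \<Rightarrow> (int \<Rightarrow> int) \<Rightarrow> nat" where
  "len n w = (LEAST k. \<exists>ws. length ws = k \<and> set ws \<subseteq> Sset n \<and> word_prod n ws = w)"

definition longest :: "nat \<Rightarrow> int set \<Rightarrow> (int \<Rightarrow> int)" where
  "longest n I = (THE w. w \<in> parab n I \<and> (\<forall>v \<in> parab n I. len n v \<le> len n w))"

definition rdes :: "nat \<Rightarrow> (int \<Rightarrow> int) \<Rightarrow> int set" where
  "rdes n w = {i \<in> Sset n. len n (w \<circ> sref n i) < len n w}"

definition ldes :: "nat \<Rightarrow> (int \<Rightarrow> int) \<Rightarrow> int set" where
  "ldes n w = {i \<in> Sset n. len n (sref n i \<circ> w) < len n w}"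

definition tau :: "nat \<Rightarrow> int \<Rightarrow> int" where
  "tau n i = (i + 1) mod int n"

text \<open>h_X: choose aleph in S - X, order S as aleph < aleph+1 < ... < aleph-1,
list X = {x_1 < ... < x_d} in that order and set h_X = s_{x_d} ... s_{x_1}.\<close>
definition hX :: "nat \<Rightarrow> int set \<Rightarrow> (int \<Rightarrow> int)" where
  "hX n X = (let a = (SOME a. a \<in> Sset n - X);
                 xs = sort_key (\<lambda>x. (x - a) mod int n) (sorted_list_of_set X)
             in word_prod n (rev xs))"

text \<open>tau-components of S relative to I: the sets B \<union> tau(B), B a connected
component (cyclic interval {a,...,a+k-1}) of I, and the singletons {a} with
a not in I \<union> tau(I).\<close>
definition tau_components :: "nat \<Rightarrow> int set \<Rightarrow> int set set" where
  "tau_components n I =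
     {A. \<exists>a k. a \<in> Sset n \<and>
        A = {(a + int j) mod int n | j. j \<le> k} \<and>
        (\<forall>j < k. (a + int j) mod int n \<in> I) \<and>
        (a + int k) mod int n \<notin> I \<and> (a - 1) mod int n \<notin> I}"

end

theory Submission
  imports Defs "HOL-Library.FuncSet"
begin


lemma sref_period: "sref n i (k + int n * q) = sref n i k + int n * q"
  unfolding sref_def by auto

lemma mod_succ_ne: "(n::nat) \<ge> 2 \<Longrightarrow> (x::int) mod int n \<noteq> (x + 1) mod int n"
proof
  assume n: "n \<ge> 2" and e: "x mod int n = (x + 1) mod int n"
  then have "int n dvd 1" by (metis add_diff_cancel_left' mod_eq_dvd_iff)
  then show False using n by simp
qed

lemma sref_invol: "n \<ge> 2 \<Longrightarrow> sref n i (sref n i k) = k"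
proof -
  assume n: "n \<ge> 2"
  have ne: "i mod int n \<noteq> (i + 1) mod int n" using mod_succ_ne[OF n] .
  show ?thesis
  proof (cases "k mod int n = i mod int n")
    case True
    then have "(k+1) mod int n = (i + 1) mod int n" by (metis mod_add_left_eq)
    then show ?thesis using True ne unfolding sref_def by auto
  next
    case F: False
    show ?thesis
    proof (cases "k mod int n = (i+1) mod int n")
      case True
      then have "(k-1) mod int n = i mod int n" by (metis add_diff_cancel_right' mod_diff_left_eq)
      then show ?thesis using True F unfolding sref_def by auto
    next
      case False
      then show ?thesis using F unfolding sref_def by auto
    qed
  qed
qed

lemma sref_near: "\<bar>sref n i k - k\<bar> \<le> 1"
  unfolding sref_def by auto

lemma wp_Nil[simp]: "word_prod n [] = id" unfolding word_prod_def by simp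
lemma wp_Cons: "word_prod n (i # ws) = sref n i \<circ> word_prod n ws" unfolding word_prod_def by simp
lemma wp_append: "word_prod n (xs @ ys) = word_prod n xs \<circ> word_prod n ys"
  by (induction xs) (auto simp: wp_Cons)
lemma wp_snoc: "word_prod n (xs @ [i]) = word_prod n xs \<circ> sref n i"
  by (simp add: wp_append wp_Cons)



definition inW :: "nat \<Rightarrow> (int \<Rightarrow> int) \<Rightarrow> bool" where
  "inW n w \<longleftrightarrow> (\<exists>ws. set ws \<subseteq> Sset n \<and> word_prod n ws = w)"

lemma periodic_int:
  assumes "\<And>x. f (x + int n) = f x"
  shows "f (x + int n * q) = f x"
proof (induction q rule: int_induct[where k=0])
  case base then show ?case by simp
next
  case (step1 i)
  have "f (x + int n * (i + 1)) = f ((x + int n * i) + int n)" by (simp add: algebra_simps)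
  also have "\<dots> = f (x + int n * i)" by (rule assms)
  finally show ?case using step1 by simp
next
  case (step2 i)
  have "f (x + int n * i) = f ((x + int n * (i - 1)) + int n)" by (simp add: algebra_simps)
  also have "\<dots> = f (x + int n * (i - 1))" by (rule assms)
  finally show ?case using step2 by simp
qed

lemma periodic_mod:
  assumes "\<And>x. f (x + int n) = f x"
  shows "f x = f (x mod int n)"
proof -
  have "x = x mod int n + int n * (x div int n)" by simp
  then have "f x = f (x mod int n + int n * (x div int n))" by simp
  also have "\<dots> = f (x mod int n)" by (rule periodic_int[of f n, OF assms])
  finally show ?thesis .
qed

lemma window_sum:
  assumes "\<And>x. f (x + int n) = (f x :: 'a::comm_monoid_add)"
  shows "(\<Sum>a\<in>{m..<m + int n}. f a) = (\<Sum>a\<in>{0..<int n}. f a)"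
proof -
  have step: "(\<Sum>a\<in>{m+1..<m + 1 + int n}. f a) = (\<Sum>a\<in>{m..<m + int n}. f a)" for m
  proof (cases "n = 0")
    case True then show ?thesis by simp
  next
    case False
    have e1: "{m..<m + int n} = insert m {m+1..<m + int n}" using False by auto
    have e2: "{m+1..<m + 1 + int n} = insert (m + int n) {m+1..<m + int n}" using False by auto
    show ?thesis unfolding e1 e2 by (simp add: assms)
  qed
  show ?thesis
  proof (induction m rule: int_induct[where k=0])
    case base then show ?case by simp
  next
    case (step1 i) then show ?case using step[of i] by simp
  next
    case (step2 i) then show ?case using step[of "i-1"] by simp
  qed
qed

lemma wp_period: "word_prod n ws (k + int n * q) = word_prod n ws k + int n * q"
  by (induction ws arbitrary: k) (auto simp: wp_Cons sref_period)

lemma wp_period1: "word_prod n ws (k + int n) = word_prod n ws k + int n"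
  using wp_period[of n ws k 1] by simp

lemma wp_disp: "\<bar>word_prod n ws k - k\<bar> \<le> int (length ws)"
proof (induction ws)
  case Nil then show ?case by simp
next
  case (Cons i ws)
  have "\<bar>sref n i (word_prod n ws k) - word_prod n ws k\<bar> \<le> 1" by (rule sref_near)
  then show ?case using Cons by (simp add: wp_Cons)
qed

lemma wp_rev_inv: "n \<ge> 2 \<Longrightarrow> word_prod n (rev ws) (word_prod n ws k) = k"
  by (induction ws arbitrary: k) (auto simp: wp_Cons wp_snoc sref_invol)

lemma wp_inv_rev: "n \<ge> 2 \<Longrightarrow> word_prod n ws (word_prod n (rev ws) k) = k"
  using wp_rev_inv[of n "rev ws" k] by simp

lemma inW_id: "inW n id"
  unfolding inW_def by (rule exI[of _ "[]"]) simp

lemma inW_sref: "inW n w \<Longrightarrow> i \<in> Sset n \<Longrightarrow> inW n (w \<circ> sref n i)"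
  unfolding inW_def by (metis Un_subset_iff empty_set list.simps(15) set_append wp_snoc insert_subset empty_subsetI)

lemma inW_comp: "inW n w \<Longrightarrow> inW n v \<Longrightarrow> inW n (w \<circ> v)"
  unfolding inW_def by (metis set_append Un_subset_iff wp_append)

lemma inW_period: "inW n w \<Longrightarrow> w (k + int n * q) = w k + int n * q"
  unfolding inW_def using wp_period by blast

lemma inW_period1: "inW n w \<Longrightarrow> w (k + int n) = w k + int n"
  using inW_period[of n w k 1] by simp

lemma inW_inj: "n \<ge> 2 \<Longrightarrow> inW n w \<Longrightarrow> inj w"
  unfolding inW_def by (metis inj_on_inverseI wp_rev_inv)

lemma inW_bound: "inW n w \<Longrightarrow> \<exists>M. \<forall>k. \<bar>w k - k\<bar> \<le> M"
  unfolding inW_def using wp_disp by blast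

definition cnt :: "(int \<Rightarrow> int) \<Rightarrow> int \<Rightarrow> nat" where
  "cnt w a = card {b. a < b \<and> w b < w a}"

definition invn :: "nat \<Rightarrow> (int \<Rightarrow> int) \<Rightarrow> nat" where
  "invn n w = (\<Sum>a\<in>{0..<int n}. cnt w a)"

lemma cnt_finite:
  assumes "inW n w" shows "finite {b. a < b \<and> w b < w a}"
proof -
  obtain M where M: "\<And>k. \<bar>w k - k\<bar> \<le> M" using inW_bound[OF assms] by blast
  have "{b. a < b \<and> w b < w a} \<subseteq> {a<..a + 2*M}"
  proof
    fix b assume "b \<in> {b. a < b \<and> w b < w a}"
    then have "a < b" "w b < w a" by auto
    moreover have "\<bar>w b - b\<bar> \<le> M" "\<bar>w a - a\<bar> \<le> M" using M by auto
    ultimately show "b \<in> {a<..a + 2*M}" by auto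
  qed
  then show ?thesis by (rule finite_subset) simp
qed

lemma cnt_period:
  assumes "inW n w" shows "cnt w (a + int n) = cnt w a"
proof -
  have "{b. a + int n < b \<and> w b < w (a + int n)} = (\<lambda>b. b + int n) ` {b. a < b \<and> w b < w a}"
  proof (rule set_eqI, rule iffI)
    fix b assume "b \<in> {b. a + int n < b \<and> w b < w (a + int n)}"
    then have "b - int n \<in> {b. a < b \<and> w b < w a}"
      using inW_period1[OF assms, of "b - int n"] inW_period1[OF assms, of a] by auto
    then show "b \<in> (\<lambda>b. b + int n) ` {b. a < b \<and> w b < w a}" by force
  next
    fix b assume "b \<in> (\<lambda>b. b + int n) ` {b. a < b \<and> w b < w a}"
    then show "b \<in> {b. a + int n < b \<and> w b < w (a + int n)}"
      using inW_period1[OF assms] by auto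
  qed
  then show ?thesis unfolding cnt_def by (simp add: card_image)
qed

lemma invn_window:
  assumes "inW n w" shows "invn n w = (\<Sum>a\<in>{m..<m + int n}. cnt w a)"
  unfolding invn_def using window_sum[of "cnt w" n m] cnt_period[OF assms] by simp



lemma cnt_conj:
  assumes n: "n \<ge> 2"
  shows "{b. a < b \<and> w (sref n i b) < w (sref n i a)} = sref n i ` {c. a < sref n i c \<and> w c < w (sref n i a)}"
proof (rule set_eqI, rule iffI)
  fix b assume "b \<in> {b. a < b \<and> w (sref n i b) < w (sref n i a)}"
  then show "b \<in> sref n i ` {c. a < sref n i c \<and> w c < w (sref n i a)}"
    using sref_invol[OF n] by (metis (mono_tags, lifting) image_eqI mem_Collect_eq)
next
  fix b assume "b \<in> sref n i ` {c. a < sref n i c \<and> w c < w (sref n i a)}"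
  then show "b \<in> {b. a < b \<and> w (sref n i b) < w (sref n i a)}"
    using sref_invol[OF n] by auto
qed

lemma sref_inj: "n \<ge> 2 \<Longrightarrow> inj (sref n i)"
  by (metis inj_on_inverseI sref_invol)

lemma cnt_comp_sref:
  assumes n: "n \<ge> 2"
  shows "cnt (w \<circ> sref n i) a = card {c. a < sref n i c \<and> w c < w (sref n i a)}"
  unfolding cnt_def comp_def cnt_conj[OF n] by (rule card_image) (meson inj_on_subset sref_inj[OF n] subset_UNIV)

lemma sref_cases:
  assumes i: "0 \<le> i" "i < int n"
  shows "sref n i c = (if c mod int n = i then c + 1 else if c mod int n = (i + 1) mod int n then c - 1 else c)"
  unfolding sref_def using i by simp

lemma sref_other:
  assumes i: "0 \<le> i" "i < int n" and a: "a mod int n \<noteq> i" "a mod int n \<noteq> (i+1) mod int n" and n: "n \<ge> 2"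
  shows "(a < sref n i c) = (a < c)"
proof -
  have "(c + 1) mod int n = (i+1) mod int n" if "c mod int n = i" using that by (metis mod_add_left_eq)
  have h1: "a \<noteq> c" if "c mod int n = i" using that a by auto
  have h2: "a \<noteq> c - 1" if "c mod int n = (i+1) mod int n"
  proof
    assume "a = c - 1"
    then have "a mod int n = (c - 1) mod int n" by simp
    also have "\<dots> = ((i + 1) - 1) mod int n" using that by (metis mod_diff_left_eq)
    finally show False using a i by simp
  qed
  show ?thesis using h1 h2 unfolding sref_cases[OF i] by auto
qed

lemma cnt_step_other:
  assumes n: "n \<ge> 2" and i: "0 \<le> i" "i < int n" and a: "a mod int n \<noteq> i" "a mod int n \<noteq> (i+1) mod int n"
  shows "cnt (w \<circ> sref n i) a = cnt w a"
proof -
  have sa: "sref n i a = a" using a unfolding sref_cases[OF i] by simp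
  show ?thesis unfolding cnt_comp_sref[OF n] unfolding sa cnt_def using sref_other[OF i a n] by simp
qed

lemma cnt_step_i:
  assumes n: "n \<ge> 2" and i: "0 \<le> i" "i < int n" and w: "inW n w"
  shows "cnt (w \<circ> sref n i) i = (if w i < w (i+1) then 1 else 0) + cnt w (i+1)"
proof -
  have ne: "(i+1) mod int n \<noteq> i mod int n" using mod_succ_ne[OF n, of i] by simp
  have imod: "i mod int n = i" using i by simp
  have si: "sref n i i = i + 1" unfolding sref_cases[OF i] using imod by simp
  have key: "(i < sref n i c) = (i + 1 < c \<or> c = i)" for c
  proof -
    have near: "\<bar>sref n i c - c\<bar> \<le> 1" by (rule sref_near)
    have "sref n i (i+1) = i" unfolding sref_cases[OF i] using ne imod by auto
    then show ?thesis using near si by (cases "c \<le> i - 1"; cases "c = i"; cases "c = i + 1"; auto)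
  qed
  have eq: "{c. i < sref n i c \<and> w c < w (sref n i i)} =
        (if w i < w (i+1) then {i} else {}) \<union> {c. i + 1 < c \<and> w c < w (i+1)}"
    unfolding key si by auto
  have fin: "finite {c. i + 1 < c \<and> w c < w (i+1)}" by (rule cnt_finite[OF w])
  have nm: "i \<notin> {c. i + 1 < c \<and> w c < w (i+1)}" by simp
  show ?thesis unfolding cnt_comp_sref[OF n] unfolding eq cnt_def using fin nm by (auto simp: card_insert_disjoint)
qed

lemma cnt_step_i1:
  assumes n: "n \<ge> 2" and i: "0 \<le> i" "i < int n" and w: "inW n w"
  shows "cnt (w \<circ> sref n i) (i+1) + (if w (i+1) < w i then 1 else 0) = cnt w i"
proof -
  have ne: "(i+1) mod int n \<noteq> i mod int n" using mod_succ_ne[OF n, of i] by simp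
  have imod: "i mod int n = i" using i by simp
  have si: "sref n i (i+1) = i" unfolding sref_cases[OF i] using imod ne by auto
  have key: "(i + 1 < sref n i c) = (i + 1 < c)" for c
  proof -
    have near: "\<bar>sref n i c - c\<bar> \<le> 1" by (rule sref_near)
    have s2: "sref n i (i+2) \<ge> i + 2"
    proof -
      have "(i+2) mod int n \<noteq> (i+1) mod int n" using mod_succ_ne[OF n, of "i+1"] by (simp add: add.assoc)
      then show ?thesis unfolding sref_cases[OF i] by auto
    qed
    show ?thesis using near si s2 by (cases "c \<le> i"; cases "c = i + 1"; cases "c = i + 2"; auto)
  qed
  have eq: "{c. i + 1 < sref n i c \<and> w c < w (sref n i (i+1))} =
        {c. i < c \<and> w c < w i} - {i+1}"
    unfolding key si by auto
  have fin: "finite {c. i < c \<and> w c < w i}" by (rule cnt_finite[OF w])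
  have mem: "w (i+1) < w i \<Longrightarrow> i + 1 \<in> {c. i < c \<and> w c < w i}" by simp
  have "card {c. i < c \<and> w c < w i} > 0" if "w (i+1) < w i"
    using mem[OF that] fin card_gt_0_iff by blast
  then show ?thesis unfolding cnt_comp_sref[OF n] unfolding eq cnt_def using fin
    by (auto simp: card_Diff_singleton)
qed

lemma window_other:
  assumes n: "n \<ge> 2" and i: "0 \<le> i" "i < int n" and a: "a \<in> {i+2..<i + int n}"
  shows "a mod int n \<noteq> i" "a mod int n \<noteq> (i+1) mod int n"
proof -
  obtain d where d: "a = i + d" "2 \<le> d" "d < int n" using a by (metis add.commute atLeastLessThan_iff diff_add_cancel add_less_cancel_left add_le_cancel_left)
  show "a mod int n \<noteq> i"
  proof
    assume "a mod int n = i"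
    then have "a mod int n = i mod int n" using i by simp
    then have "int n dvd (a - i)" by (simp add: mod_eq_dvd_iff)
    then have "int n dvd d" using d by simp
    then show False using d zdvd_imp_le by fastforce
  qed
  show "a mod int n \<noteq> (i+1) mod int n"
  proof
    assume "a mod int n = (i+1) mod int n"
    then have "int n dvd (a - (i + 1))" by (simp add: mod_eq_dvd_iff)
    moreover have "a - (i+1) = d - 1" using d by simp
    ultimately have "int n dvd (d - 1)" by simp
    then show False using d zdvd_imp_le by fastforce
  qed
qed

lemma invn_step:
  assumes n: "n \<ge> 2" and i: "0 \<le> i" "i < int n" and w: "inW n w"
  shows "invn n (w \<circ> sref n i) + (if w (i+1) < w i then 1 else 0) = invn n w + (if w i < w (i+1) then 1 else 0)"
proof -
  have iS: "i \<in> Sset n" unfolding Sset_def using i by simp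
  have u: "inW n (w \<circ> sref n i)" by (rule inW_sref[OF w iS])
  have win: "{i..<i + int n} = insert i (insert (i+1) {i+2..<i + int n})" using n by auto
  have rest: "(\<Sum>a\<in>{i+2..<i + int n}. cnt (w \<circ> sref n i) a) = (\<Sum>a\<in>{i+2..<i + int n}. cnt w a)"
  proof (rule sum.cong[OF refl])
    fix a assume "a \<in> {i+2..<i + int n}"
    then show "cnt (w \<circ> sref n i) a = cnt w a"
      using cnt_step_other[OF n i] window_other[OF n i] by blast
  qed
  have "invn n (w \<circ> sref n i) = cnt (w \<circ> sref n i) i + cnt (w \<circ> sref n i) (i+1) + (\<Sum>a\<in>{i+2..<i + int n}. cnt w a)"
    unfolding invn_window[OF u, of i] win using rest by simp
  moreover have "invn n w = cnt w i + cnt w (i+1) + (\<Sum>a\<in>{i+2..<i + int n}. cnt w a)"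
    unfolding invn_window[OF w, of i] win by simp
  ultimately show ?thesis using cnt_step_i[OF n i w] cnt_step_i1[OF n i w] by simp
qed



definition Dsum :: "nat \<Rightarrow> (int \<Rightarrow> int) \<Rightarrow> int" where
  "Dsum n w = (\<Sum>a\<in>{0..<int n}. w a - a)"

lemma Dsum_window: "inW n w \<Longrightarrow> Dsum n w = (\<Sum>a\<in>{m..<m + int n}. w a - a)"
  unfolding Dsum_def using window_sum[of "\<lambda>a. w a - a" n m] inW_period1[of n w] by simp

lemma sref_window:
  assumes n: "n \<ge> 2" and i: "0 \<le> i" "i < int n"
  shows "sref n i ` {i..<i + int n} = {i..<i + int n}"
proof (rule endo_inj_surj)
  show "finite {i..<i + int n}" by simp
  show "inj_on (sref n i) {i..<i + int n}" using sref_inj[OF n] by (meson inj_on_subset subset_UNIV)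
  have ne: "(i+1) mod int n \<noteq> i mod int n" using mod_succ_ne[OF n, of i] by simp
  have imod: "i mod int n = i" using i by simp
  show "sref n i ` {i..<i + int n} \<subseteq> {i..<i + int n}"
  proof
    fix b assume "b \<in> sref n i ` {i..<i + int n}"
    then obtain a where a: "a \<in> {i..<i + int n}" "b = sref n i a" by blast
    show "b \<in> {i..<i + int n}"
    proof (cases "a = i \<or> a = i + 1")
      case True then show ?thesis using a n ne imod unfolding sref_cases[OF i] by auto
    next
      case False
      then have "a \<in> {i+2..<i + int n}" using a by auto
      then have "sref n i a = a" using window_other[OF n i] unfolding sref_cases[OF i] by auto
      then show ?thesis using a by simp
    qed
  qed
qed

lemma Dsum_step:
  assumes n: "n \<ge> 2" and i: "0 \<le> i" "i < int n" and w: "inW n w"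
  shows "Dsum n (w \<circ> sref n i) = Dsum n w"
proof -
  have iS: "i \<in> Sset n" unfolding Sset_def using i by simp
  have u: "inW n (w \<circ> sref n i)" by (rule inW_sref[OF w iS])
  have inj: "inj_on (sref n i) {i..<i + int n}" using sref_inj[OF n] by (meson inj_on_subset subset_UNIV)
  have "(\<Sum>a\<in>{i..<i + int n}. w (sref n i a)) = (\<Sum>a\<in>sref n i ` {i..<i + int n}. w a)"
    using sum.reindex[OF inj, of w] by simp
  also have "\<dots> = (\<Sum>a\<in>{i..<i + int n}. w a)" using sref_window[OF n i] by simp
  finally have e: "(\<Sum>a\<in>{i..<i + int n}. w (sref n i a)) = (\<Sum>a\<in>{i..<i + int n}. w a)" .
  show ?thesis unfolding Dsum_window[OF u, of i] Dsum_window[OF w, of i]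
    using e by (simp add: sum_subtractf)
qed

lemma Dsum_zero:
  assumes n: "n \<ge> 2" and ws: "set ws \<subseteq> Sset n"
  shows "Dsum n (word_prod n ws) = 0"
  using ws
proof (induction ws rule: rev_induct)
  case Nil then show ?case by (simp add: Dsum_def)
next
  case (snoc i ws)
  then have i: "0 \<le> i" "i < int n" unfolding Sset_def by auto
  have w: "inW n (word_prod n ws)" unfolding inW_def using snoc by auto
  have "Dsum n (word_prod n (ws@[i])) = Dsum n (word_prod n ws \<circ> sref n i)" by (simp only: wp_snoc)
  also have "\<dots> = Dsum n (word_prod n ws)" by (rule Dsum_step[OF n i w])
  finally show ?case using snoc by simp
qed

lemma inW_Dsum: "n \<ge> 2 \<Longrightarrow> inW n w \<Longrightarrow> Dsum n w = 0"
  unfolding inW_def using Dsum_zero by blast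

lemma invn_id: "invn n id = 0"
  unfolding invn_def cnt_def by simp

lemma invn_le:
  assumes n: "n \<ge> 2" and ws: "set ws \<subseteq> Sset n"
  shows "invn n (word_prod n ws) \<le> length ws"
  using ws
proof (induction ws rule: rev_induct)
  case Nil then show ?case using invn_id[of n] by (simp add: id_def)
next
  case (snoc i ws)
  then have i: "0 \<le> i" "i < int n" unfolding Sset_def by auto
  have w: "inW n (word_prod n ws)" unfolding inW_def using snoc by auto
  have "invn n (word_prod n (ws@[i])) = invn n (word_prod n ws \<circ> sref n i)" by (simp only: wp_snoc)
  then show ?case using snoc invn_step[OF n i w] by (simp split: if_splits)
qed

lemma cnt_zero_all:
  assumes n: "n \<ge> 2" and w: "inW n w" and z: "invn n w = 0"
  shows "cnt w a = 0"
proof -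
  have per: "\<And>x. cnt w (x + int n) = cnt w x" using cnt_period[OF w] .
  have "a mod int n \<in> {0..<int n}" using n by simp
  then have "cnt w (a mod int n) = 0" using z unfolding invn_def by simp
  then show ?thesis using periodic_mod[of "cnt w" n, OF per] by simp
qed

lemma invn_zero_id:
  assumes n: "n \<ge> 2" and w: "inW n w" and z: "invn n w = 0"
  shows "w = id"
proof -
  have inc: "w a < w (a+1)" for a
  proof -
    have "cnt w a = 0" by (rule cnt_zero_all[OF n w z])
    then have "{b. a < b \<and> w b < w a} = {}" using cnt_finite[OF w, of a] unfolding cnt_def by simp
    then have "\<not> w (a+1) < w a" by auto
    moreover have "w (a+1) \<noteq> w a" using inW_inj[OF n w] by (metis add_cancel_left_right inj_eq one_neq_zero)
    ultimately show ?thesis by simp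
  qed
  have grow: "w (a + int j) \<ge> w a + int j" for a j
  proof (induction j)
    case 0 then show ?case by simp
  next
    case (Suc j)
    have "w (a + int j) < w ((a + int j) + 1)" by (rule inc)
    moreover have "(a + int j) + 1 = a + int (Suc j)" by simp
    ultimately have "w (a + int j) < w (a + int (Suc j))" by metis
    then show ?case using Suc by linarith
  qed
  have step: "w (a+1) = w a + 1" for a
  proof (rule ccontr)
    assume "w (a+1) \<noteq> w a + 1"
    then have "w (a+1) \<ge> w a + 2" using inc[of a] by simp
    moreover have "w (a + 1 + int (n-1)) \<ge> w (a+1) + int (n-1)" by (rule grow)
    moreover have "a + 1 + int (n-1) = a + int n" using n by simp
    moreover have "w (a + int n) = w a + int n" by (rule inW_period1[OF w])
    ultimately show False using n by simp
  qed
  have lin: "w a = a + w 0" for a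
  proof (induction a rule: int_induct[where k=0])
    case base then show ?case by simp
  next
    case (step1 i) then show ?case using step[of i] by simp
  next
    case (step2 i) then show ?case using step[of "i-1"] by simp
  qed
  have l2: "w a - a = w 0" for a using lin[of a] by linarith
  have "Dsum n w = int n * w 0" unfolding Dsum_def l2 by simp
  then have w0: "w 0 = 0" using inW_Dsum[OF n w] n by simp
  have "w x = x" for x using lin[of x] w0 by linarith
  then show ?thesis by (simp add: fun_eq_iff)
qed

lemma strict_inc_cnt:
  assumes inc: "\<And>a. w a < w (a+1)"
  shows "cnt w a = 0"
proof -
  have "w a < w (a + int j)" if "j > 0" for j
    using that
  proof (induction j)
    case 0 then show ?case by simp
  next
    case (Suc j)
    have "w (a + int j) < w ((a + int j) + 1)" by (rule inc)
    moreover have "(a + int j) + 1 = a + int (Suc j)" by simp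
    ultimately have "w (a + int j) < w (a + int (Suc j))" by metis
    then show ?case using Suc inc[of a] by (cases "j = 0") auto
  qed
  then have lt: "w a < w b" if "a < b" for b
  proof -
    have "b = a + int (nat (b-a))" "nat (b - a) > 0" using that by auto
    then show ?thesis using \<open>\<And>j. 0 < j \<Longrightarrow> w a < w (a + int j)\<close> by metis
  qed
  have e: "{b. a < b \<and> w b < w a} = {}" using lt by force
  show ?thesis unfolding cnt_def e by simp
qed

lemma descent_exists:
  assumes n: "n \<ge> 2" and w: "inW n w" and p: "invn n w > 0"
  shows "\<exists>i. 0 \<le> i \<and> i < int n \<and> w (i+1) < w i"
proof (rule ccontr)
  assume "\<not> ?thesis"
  then have h: "0 \<le> i \<Longrightarrow> i < int n \<Longrightarrow> w i < w (i+1)" for i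
    using inW_inj[OF n w] by (metis add_cancel_left_right inj_eq not_less_iff_gr_or_eq one_neq_zero)
  have "w a < w (a+1)" for a
  proof -
    define r where "r = a mod int n"
    define q where "q = a div int n"
    have a: "a = r + int n * q" unfolding r_def q_def by simp
    have a1: "a + 1 = (r + 1) + int n * q" unfolding a by simp
    have "w r < w (r + 1)" using h n unfolding r_def by simp
    then show ?thesis unfolding a1 unfolding a inW_period[OF w] by simp
  qed
  then have "cnt w a = 0" for a by (rule strict_inc_cnt)
  then have "invn n w = 0" unfolding invn_def by simp
  then show False using p by simp
qed

lemma word_exists:
  assumes n: "n \<ge> 2"
  shows "inW n w \<Longrightarrow> \<exists>ws. length ws = invn n w \<and> set ws \<subseteq> Sset n \<and> word_prod n ws = w"
proof (induction "invn n w" arbitrary: w)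
  case 0
  then have "w = id" using invn_zero_id[OF n] by simp
  then show ?case using 0 by (intro exI[of _ "[]"]) simp
next
  case (Suc k)
  obtain i where i: "0 \<le> i" "i < int n" "w (i+1) < w i" using descent_exists[OF n Suc(3)] Suc(2) by auto
  have iS: "i \<in> Sset n" unfolding Sset_def using i by simp
  let ?v = "w \<circ> sref n i"
  have v: "inW n ?v" by (rule inW_sref[OF Suc(3) iS])
  have "invn n ?v = k" using invn_step[OF n i(1,2) Suc(3)] i(3) Suc(2) by simp
  then obtain us where us: "length us = k" "set us \<subseteq> Sset n" "word_prod n us = ?v"
    using Suc(1) v by metis
  have "word_prod n (us @ [i]) = w"
    unfolding wp_snoc us(3) using sref_invol[OF n] by (simp add: fun_eq_iff)
  then show ?case using us iS Suc(2) by (intro exI[of _ "us @ [i]"]) auto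
qed

lemma len_eq:
  assumes n: "n \<ge> 2" and w: "inW n w"
  shows "len n w = invn n w"
  unfolding len_def
proof (rule Least_equality)
  show "\<exists>ws. length ws = invn n w \<and> set ws \<subseteq> Sset n \<and> word_prod n ws = w"
    by (rule word_exists[OF n w])
next
  fix k assume "\<exists>ws. length ws = k \<and> set ws \<subseteq> Sset n \<and> word_prod n ws = w"
  then show "invn n w \<le> k" using invn_le[OF n] by blast
qed

lemma len_step:
  assumes n: "n \<ge> 2" and w: "inW n w" and iS: "i \<in> Sset n"
  shows "len n (w \<circ> sref n i) = (if w i < w (i+1) then len n w + 1 else len n w - 1)"
    and "w i \<noteq> w (i+1)"
proof -
  have i: "0 \<le> i" "i < int n" using iS unfolding Sset_def by auto
  show ne: "w i \<noteq> w (i+1)" using inW_inj[OF n w] by (metis add_cancel_left_right inj_eq one_neq_zero)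
  have v: "inW n (w \<circ> sref n i)" by (rule inW_sref[OF w iS])
  show "len n (w \<circ> sref n i) = (if w i < w (i+1) then len n w + 1 else len n w - 1)"
    unfolding len_eq[OF n w] len_eq[OF n v] using invn_step[OF n i w] ne by auto
qed

lemma rdes_char:
  assumes n: "n \<ge> 2" and w: "inW n w"
  shows "rdes n w = {i \<in> Sset n. w (i+1) < w i}"
proof -
  have "len n (w \<circ> sref n i) < len n w \<longleftrightarrow> w (i+1) < w i" if "i \<in> Sset n" for i
  proof -
    have "len n w > 0" if "w (i+1) < w i"
    proof -
      have "len n (w \<circ> sref n (i)) = len n w - 1" using len_step[OF n w \<open>i \<in> Sset n\<close>] that by simp
      have "invn n w > 0"
      proof (rule ccontr)
        assume "\<not> invn n w > 0"
        then have "w = id" using invn_zero_id[OF n w] by simp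
        then show False using that by simp
      qed
      then show ?thesis using len_eq[OF n w] by simp
    qed
    then show ?thesis using len_step[OF n w that] by auto
  qed
  then show ?thesis unfolding rdes_def by auto
qed



lemma len_le_word: "set ws \<subseteq> Sset n \<Longrightarrow> len n (word_prod n ws) \<le> length ws"
  unfolding len_def by (rule Least_le) blast

lemma len_rev_le:
  assumes n: "n \<ge> 2" and ws: "set ws \<subseteq> Sset n"
  shows "len n (word_prod n (rev ws)) \<le> len n (word_prod n ws)"
proof -
  have w: "inW n (word_prod n ws)" unfolding inW_def using ws by blast
  obtain us where us: "length us = invn n (word_prod n ws)" "set us \<subseteq> Sset n" "word_prod n us = word_prod n ws"
    using word_exists[OF n w] by blast
  have "word_prod n (rev us) k = word_prod n (rev ws) k" for k
  proof -
    define k' where "k' = word_prod n (rev ws) k"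
    have "word_prod n ws k' = k" unfolding k'_def by (rule wp_inv_rev[OF n])
    then have "word_prod n (rev us) k = word_prod n (rev us) (word_prod n us k')" using us(3) by simp
    also have "\<dots> = k'" by (rule wp_rev_inv[OF n])
    finally show ?thesis unfolding k'_def .
  qed
  then have "word_prod n (rev us) = word_prod n (rev ws)" by auto
  then have "len n (word_prod n (rev ws)) \<le> length (rev us)" using len_le_word[of "rev us" n] us(2) by simp
  then show ?thesis using us(1) len_eq[OF n w] by simp
qed

lemma len_rev:
  assumes n: "n \<ge> 2" and ws: "set ws \<subseteq> Sset n"
  shows "len n (word_prod n (rev ws)) = len n (word_prod n ws)"
  using len_rev_le[OF n ws] len_rev_le[OF n, of "rev ws"] ws by simp

lemma ldes_char:
  assumes n: "n \<ge> 2" and ws: "set ws \<subseteq> Sset n"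
  shows "ldes n (word_prod n ws) = {i \<in> Sset n. word_prod n (rev ws) (i+1) < word_prod n (rev ws) i}"
proof -
  let ?g = "word_prod n (rev ws)"
  have g: "inW n ?g" unfolding inW_def using ws by (intro exI[of _ "rev ws"]) simp
  have "len n (sref n i \<circ> word_prod n ws) < len n (word_prod n ws) \<longleftrightarrow> i \<in> rdes n ?g" if iS: "i \<in> Sset n" for i
  proof -
    have "sref n i \<circ> word_prod n ws = word_prod n (i # ws)" by (simp add: wp_Cons)
    then have "len n (sref n i \<circ> word_prod n ws) = len n (word_prod n (rev (i # ws)))"
      using len_rev[OF n, of "i # ws"] ws iS by simp
    also have "word_prod n (rev (i # ws)) = ?g \<circ> sref n i" by (simp add: wp_snoc)
    finally have "len n (sref n i \<circ> word_prod n ws) = len n (?g \<circ> sref n i)" .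
    moreover have "len n (word_prod n ws) = len n ?g" using len_rev[OF n ws] by simp
    ultimately show ?thesis unfolding rdes_def using iS by simp
  qed
  then show ?thesis unfolding ldes_def rdes_char[OF n g] by auto
qed



definition bP :: "(int \<Rightarrow> bool) \<Rightarrow> int \<Rightarrow> int" where
  "bP P p = p - int (LEAST l. \<not> P (p - 1 - int l))"
definition eP :: "(int \<Rightarrow> bool) \<Rightarrow> int \<Rightarrow> int" where
  "eP P p = p + int (LEAST r. \<not> P (p + int r))"
definition good :: "(int \<Rightarrow> bool) \<Rightarrow> bool" where
  "good P \<longleftrightarrow> (\<forall>p. \<exists>r. \<not> P (p + int r)) \<and> (\<forall>p. \<exists>l. \<not> P (p - 1 - int l))"
definition Wf :: "(int \<Rightarrow> bool) \<Rightarrow> int \<Rightarrow> int" where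
  "Wf P p = bP P p + eP P p - p"
definition Hf :: "(int \<Rightarrow> bool) \<Rightarrow> int \<Rightarrow> int" where
  "Hf P p = (if P (p - 1) then p - 1 else eP P p)"
definition Kf :: "(int \<Rightarrow> bool) \<Rightarrow> int \<Rightarrow> int" where
  "Kf P p = (if P p then p + 1 else bP P p)"
definition inP :: "nat \<Rightarrow> int set \<Rightarrow> int \<Rightarrow> bool" where
  "inP n X p \<longleftrightarrow> p mod int n \<in> X"

lemma e_char:
  assumes "q \<le> c" "\<And>t. q \<le> t \<Longrightarrow> t < c \<Longrightarrow> P t" "\<not> P c"
  shows "eP P q = c"
proof -
  have "(LEAST r. \<not> P (q + int r)) = nat (c - q)"
  proof (rule Least_equality)
    show "\<not> P (q + int (nat (c - q)))" using assms by simp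
  next
    fix r assume "\<not> P (q + int r)"
    then show "nat (c - q) \<le> r" using assms(2)[of "q + int r"] by fastforce
  qed
  then show ?thesis unfolding eP_def using assms by simp
qed

lemma b_char:
  assumes "c \<le> q" "\<And>t. c \<le> t \<Longrightarrow> t < q \<Longrightarrow> P t" "\<not> P (c - 1)"
  shows "bP P q = c"
proof -
  have "(LEAST l. \<not> P (q - 1 - int l)) = nat (q - c)"
  proof (rule Least_equality)
    show "\<not> P (q - 1 - int (nat (q - c)))" using assms by simp
  next
    fix l assume "\<not> P (q - 1 - int l)"
    then show "nat (q - c) \<le> l" using assms(2)[of "q - 1 - int l"] by fastforce
  qed
  then show ?thesis unfolding bP_def using assms by simp
qed

lemma e_ge: "p \<le> eP P p" unfolding eP_def by simp
lemma b_le: "bP P p \<le> p" unfolding bP_def by simp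

lemma e_le_of: "\<not> P c \<Longrightarrow> p \<le> c \<Longrightarrow> eP P p \<le> c"
  unfolding eP_def using Least_le[of "\<lambda>r. \<not> P (p + int r)" "nat (c - p)"] by simp

lemma b_ge_of: "\<not> P (c - 1) \<Longrightarrow> c \<le> p \<Longrightarrow> c \<le> bP P p"
  unfolding bP_def using Least_le[of "\<lambda>l. \<not> P (p - 1 - int l)" "nat (p - c)"] by simp

lemma e_not: "good P \<Longrightarrow> \<not> P (eP P p)"
  unfolding eP_def good_def by (metis (mono_tags, lifting) LeastI)

lemma b_not: "good P \<Longrightarrow> \<not> P (bP P p - 1)"
proof -
  assume "good P"
  then obtain l where "\<not> P (p - 1 - int l)" unfolding good_def by blast
  then have "\<not> P (p - 1 - int (LEAST l. \<not> P (p - 1 - int l)))" by (rule LeastI)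
  then show ?thesis unfolding bP_def by (simp add: algebra_simps)
qed

lemma e_in: "p \<le> t \<Longrightarrow> t < eP P p \<Longrightarrow> P t"
  using e_le_of[of P t p] by force

lemma b_in: "bP P p \<le> t \<Longrightarrow> t < p \<Longrightarrow> P t"
  using b_ge_of[of P "t+1" p] by force

lemma blk_same:
  assumes g: "good P" and q: "bP P p \<le> q" "q \<le> eP P p"
  shows "bP P q = bP P p" "eP P q = eP P p"
proof -
  show "eP P q = eP P p"
  proof (rule e_char)
    show "q \<le> eP P p" by fact
    show "\<not> P (eP P p)" by (rule e_not[OF g])
    fix t assume "q \<le> t" "t < eP P p"
    then show "P t" using b_in[of P p t] e_in[of p t P] q by (cases "t < p") auto
  qed
  show "bP P q = bP P p"
  proof (rule b_char)
    show "bP P p \<le> q" by fact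
    show "\<not> P (bP P p - 1)" by (rule b_not[OF g])
    fix t assume "bP P p \<le> t" "t < q"
    then show "P t" using b_in[of P p t] e_in[of p t P] q by (cases "t < p") auto
  qed
qed

lemma e_mono:
  assumes g: "good P" and "p \<le> q" shows "eP P p \<le> eP P q"
proof (cases "q \<le> eP P p")
  case True
  then have "eP P q = eP P p" using blk_same[OF g] b_le[of P p] assms(2) by (meson order_trans)
  then show ?thesis by simp
next
  case False then show ?thesis using e_ge[of q P] by simp
qed

lemma b_mono:
  assumes g: "good P" and "p \<le> q" shows "bP P p \<le> bP P q"
proof (cases "bP P q \<le> p")
  case True
  then have "bP P p = bP P q" using blk_same[OF g, of q p] e_ge[of q P] assms(2) by (meson order_trans)
  then show ?thesis by simp
next
  case False then show ?thesis using b_le[of P p] by simp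
qed

lemma e_self: "\<not> P p \<Longrightarrow> eP P p = p"
  by (rule e_char) auto

lemma b_self: "\<not> P (p - 1) \<Longrightarrow> bP P p = p"
  by (rule b_char) auto

lemma e_succ: "good P \<Longrightarrow> P p \<Longrightarrow> eP P p = eP P (p + 1)"
proof -
  assume g: "good P" and p: "P p"
  show ?thesis
  proof (rule e_char)
    show "p \<le> eP P (p + 1)" using e_ge[of "p+1" P] by simp
    show "\<not> P (eP P (p + 1))" by (rule e_not[OF g])
    fix t assume "p \<le> t" "t < eP P (p + 1)"
    then show "P t" using p e_in[of "p+1" t P] by (cases "t = p") auto
  qed
qed

lemma W_range: "bP P p \<le> Wf P p" "Wf P p \<le> eP P p"
  unfolding Wf_def using b_le[of P p] e_ge[of p P] by auto

lemma W_invol: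
  assumes g: "good P" shows "Wf P (Wf P p) = p"
proof -
  have "bP P (Wf P p) = bP P p" "eP P (Wf P p) = eP P p" using blk_same[OF g, of p "Wf P p"] W_range[of P p] by auto
  then show ?thesis unfolding Wf_def by simp
qed

lemma W_in_blk:
  assumes g: "good P" shows "bP P (Wf P p) = bP P p" "eP P (Wf P p) = eP P p"
  using blk_same[OF g, of p "Wf P p"] W_range[of P p] by auto

lemma W_desc:
  assumes g: "good P" and "P p" shows "Wf P (p+1) = Wf P p - 1"
proof -
  have e: "eP P (p+1) = eP P p" using e_succ[of P p, OF g assms(2)] by simp
  have "p + 1 \<le> eP P p"
    using e_not[OF g, of p] e_ge[of p P] assms(2) by (metis add1_zle_eq order_le_less)
  then have "bP P (p+1) = bP P p" using blk_same(1)[OF g, of p "p+1"] b_le[of P p] by simp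
  then show ?thesis unfolding Wf_def e by simp
qed

lemma W_asc:
  assumes g: "good P" and "\<not> P p" shows "Wf P p < Wf P (p+1)"
proof -
  have "Wf P p \<le> p" using W_range(2)[of P p] e_self[of P p, OF assms(2)] by simp
  moreover have "bP P (p+1) = p + 1" using b_self[of P "p+1"] assms(2) by simp
  ultimately show ?thesis using W_range(1)[of P "p+1"] by simp
qed

lemma W_desc_iff:
  assumes g: "good P" shows "Wf P (p+1) < Wf P p \<longleftrightarrow> P p"
  using W_desc[OF g, of p] W_asc[OF g, of p] by (cases "P p") auto

lemma HK:
  assumes g: "good P" shows "Hf P (Kf P p) = p"
proof (cases "P p")
  case True then show ?thesis unfolding Hf_def Kf_def by simp
next
  case False
  have "eP P (bP P p) = p"
    by (rule e_char) (auto simp: b_le b_in False)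
  then show ?thesis unfolding Hf_def Kf_def using False b_not[OF g, of p] by simp
qed

lemma H_le_iff:
  shows "Hf P (y+1) = y \<longleftrightarrow> P y"
  unfolding Hf_def using e_ge[of "y+1" P] by auto



lemma inP_period: "inP n X (p + int n * q) = inP n X p"
  unfolding inP_def by simp

lemma inP_period1: "inP n X (p + int n) = inP n X p"
  using inP_period[of n X p 1] by simp

lemma inP_Sset: "x \<in> Sset n \<Longrightarrow> inP n X x \<longleftrightarrow> x \<in> X"
  unfolding inP_def Sset_def by simp

lemma good_inP:
  assumes n: "n > 0" and a: "0 \<le> a" "a < int n" "a \<notin> X"
  shows "good (inP n X)"
  unfolding good_def
proof (intro conjI allI)
  fix p
  have "(p + int (nat ((a - p) mod int n))) mod int n = a"
    using n a by (simp add: mod_add_right_eq)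
  then show "\<exists>r. \<not> inP n X (p + int r)" unfolding inP_def using a by metis
next
  fix p
  have "(p - 1 - int (nat ((p - 1 - a) mod int n))) mod int n = a"
    using n a by (simp add: mod_diff_right_eq)
  then show "\<exists>l. \<not> inP n X (p - 1 - int l)" unfolding inP_def using a by metis
qed

lemma e_bound:
  assumes n: "n > 0" and a: "0 \<le> a" "a < int n" "a \<notin> X"
  shows "eP (inP n X) p < p + int n"
proof -
  have "(p + (a - p) mod int n) mod int n = a"
    using n a by (simp add: mod_add_right_eq)
  then have "\<not> inP n X (p + (a - p) mod int n)" unfolding inP_def using a by simp
  then have "eP (inP n X) p \<le> p + (a - p) mod int n" by (rule e_le_of) (use n in simp)
  then show ?thesis using n by (smt (verit) pos_mod_bound of_nat_0_less_iff)
qed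

lemma b_bound:
  assumes n: "n > 0" and a: "0 \<le> a" "a < int n" "a \<notin> X"
  shows "p - int n < bP (inP n X) p"
proof -
  have e: "p - (p - 1 - a) mod int n - 1 = (p - 1) - (p - 1 - a) mod int n" by simp
  have "((p - 1) - (p - 1 - a) mod int n) mod int n = ((p - 1) - (p - 1 - a)) mod int n"
    by (rule mod_diff_right_eq)
  then have "(p - (p - 1 - a) mod int n - 1) mod int n = a"
    unfolding e using n a by simp
  then have "\<not> inP n X (p - (p - 1 - a) mod int n - 1)" unfolding inP_def using a by simp
  then have "p - (p - 1 - a) mod int n \<le> bP (inP n X) p" by (rule b_ge_of) (use n in simp)
  then show ?thesis using n by (smt (verit) pos_mod_bound of_nat_0_less_iff)
qed

lemma e_period:
  assumes per: "\<And>x. P (x + int n) = P x" and g: "good P"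
  shows "eP P (p + int n) = eP P p + int n"
proof (rule e_char)
  show "p + int n \<le> eP P p + int n" using e_ge[of p P] by simp
  show "\<not> P (eP P p + int n)" using per e_not[OF g] by simp
  fix t assume "p + int n \<le> t" "t < eP P p + int n"
  then have "P (t - int n)" using e_in[of p "t - int n" P] by simp
  then show "P t" using per[of "t - int n"] by simp
qed

lemma b_period:
  assumes per: "\<And>x. P (x + int n) = P x" and g: "good P"
  shows "bP P (p + int n) = bP P p + int n"
proof (rule b_char)
  show "bP P p + int n \<le> p + int n" using b_le[of P p] by simp
  have "\<not> P (bP P p - 1)" using b_not[OF g] by simp
  then show "\<not> P (bP P p + int n - 1)" using per[of "bP P p - 1"] by (simp add: algebra_simps)
  fix t assume "bP P p + int n \<le> t" "t < p + int n"
  then have "P (t - int n)" using b_in[of P p "t - int n"] by simp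
  then show "P t" using per[of "t - int n"] by simp
qed

lemma b_period_int:
  assumes per: "\<And>x. P (x + int n) = P x" and g: "good P"
  shows "bP P (p + int n * q) = bP P p + int n * q"
proof -
  have "(\<lambda>x. bP P x - x) (p + int n * q) = (\<lambda>x. bP P x - x) p"
    by (rule periodic_int) (simp add: b_period[OF per g])
  then show ?thesis by simp
qed

lemma inP_tau:
  assumes I: "I \<subseteq> Sset n" and n: "n > 0"
  shows "inP n (tau n ` I) p \<longleftrightarrow> inP n I (p - 1)"
proof
  assume "inP n (tau n ` I) p"
  then obtain i where i: "i \<in> I" "p mod int n = (i + 1) mod int n" unfolding inP_def tau_def by auto
  have "i mod int n = i" using i(1) I unfolding Sset_def by auto
  moreover have "(p - 1) mod int n = ((i + 1) - 1) mod int n" using i(2) by (metis mod_diff_left_eq)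
  ultimately show "inP n I (p - 1)" unfolding inP_def using i(1) by simp
next
  assume "inP n I (p - 1)"
  then have "(p - 1) mod int n \<in> I" unfolding inP_def .
  moreover have "tau n ((p - 1) mod int n) = p mod int n" unfolding tau_def by (simp add: mod_add_left_eq)
  ultimately show "inP n (tau n ` I) p" unfolding inP_def by (metis image_eqI)
qed

lemma shift_blocks:
  assumes "\<And>p. Q p \<longleftrightarrow> P (p - 1)"
  shows "bP Q p = bP P (p - 1) + 1" "eP Q p = eP P (p - 1) + 1" "Wf Q p = Wf P (p - 1) + 1"
proof -
  have q: "Q = (\<lambda>p. P (p - 1))" using assms by auto
  show b: "bP Q p = bP P (p - 1) + 1" unfolding q bP_def by (simp add: algebra_simps)
  show e: "eP Q p = eP P (p - 1) + 1" unfolding q eP_def by (simp add: algebra_simps)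
  show "Wf Q p = Wf P (p - 1) + 1" unfolding Wf_def b e by simp
qed



fun okl :: "nat \<Rightarrow> int list \<Rightarrow> bool" where
  "okl n [] = True"
| "okl n (y # zs) = (y \<notin> set zs \<and> (y - 1) mod int n \<notin> set zs \<and> okl n zs)"

lemma good_proper:
  assumes n: "n \<ge> 2" and X: "X \<subseteq> Sset n" "X \<noteq> Sset n"
  shows "good (inP n X)"
proof -
  obtain a where "a \<in> Sset n" "a \<notin> X" using X by blast
  then show ?thesis using good_inP[of n a X] n unfolding Sset_def by auto
qed

lemma dvd_pos_ge: "(c::int) mod int n = p mod int n \<Longrightarrow> p < c \<Longrightarrow> p + int n \<le> c"
proof -
  assume "c mod int n = p mod int n" "p < c"
  then have "int n dvd (c - p)" by (simp add: mod_eq_dvd_iff)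
  then obtain k where k: "c - p = int n * k" by (elim dvdE)
  then have "int n * k > 0" using \<open>p < c\<close> by simp
  then have "k > 0" by (simp add: zero_less_mult_iff)
  then have "int n * k \<ge> int n * 1" by (intro mult_left_mono) auto
  then show ?thesis using k by simp
qed

lemma H_cons:
  assumes n: "n \<ge> 2" and y: "y \<in> Sset n" and Z: "insert y Z \<subseteq> Sset n" "insert y Z \<noteq> Sset n"
    and yZ: "y \<notin> Z" "(y - 1) mod int n \<notin> Z"
  shows "Hf (inP n Z) \<circ> sref n y = Hf (inP n (insert y Z))"
proof
  fix p
  let ?P = "inP n Z" and ?Q = "inP n (insert y Z)"
  have gP: "good ?P" using good_proper[OF n, of Z] Z by auto
  have gQ: "good ?Q" using good_proper[OF n] Z by auto
  have yr: "0 \<le> y" "y < int n" using y unfolding Sset_def by auto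
  have ymod: "y mod int n = y" using yr by simp
  have Q: "?Q t \<longleftrightarrow> ?P t \<or> t mod int n = y" for t unfolding inP_def by auto
  have Py: "t mod int n = y \<Longrightarrow> \<not> ?P t" for t unfolding inP_def using yZ by simp
  have Py1: "t mod int n = (y - 1) mod int n \<Longrightarrow> \<not> ?P t" for t unfolding inP_def using yZ by simp
  have ne: "(y - 1) mod int n \<noteq> y" using mod_succ_ne[OF n, of "y - 1"] ymod by simp
  have m1: "t mod int n = s mod int n \<Longrightarrow> (t - 1) mod int n = (s - 1) mod int n" for t s :: int
    by (metis mod_diff_left_eq)
  show "(Hf ?P \<circ> sref n y) p = Hf ?Q p"
  proof (cases "p mod int n = y")
    case True
    then have sp: "sref n y p = p + 1" unfolding sref_cases[OF yr] by simp
    have pm1: "(p - 1) mod int n = (y - 1) mod int n" using m1[of p y] True ymod by simp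
    have nQ: "\<not> ?Q (p - 1)" using Q Py1[OF pm1] pm1 ne by simp
    have h1: "Hf ?P (p + 1) = eP ?P (p + 1)" unfolding Hf_def using Py[OF True] by simp
    have "eP ?Q p = eP ?P (p + 1)"
    proof (rule e_char)
      show "p \<le> eP ?P (p + 1)" using e_ge[of "p+1" ?P] by simp
      fix t assume "p \<le> t" "t < eP ?P (p + 1)"
      then show "?Q t" using Q True e_in[of "p+1" t ?P] by (cases "t = p") auto
    next
      let ?c = "eP ?P (p + 1)"
      show "\<not> ?Q ?c"
      proof
        assume "?Q ?c"
        then have cm: "?c mod int n = y" using Q e_not[OF gP] by auto
        have "p + 1 \<le> ?c" by (rule e_ge)
        then have "p + int n \<le> ?c" using dvd_pos_ge[of ?c n p] cm True by simp
        then have "?P (?c - 1)" using e_in[of "p+1" "?c - 1" ?P] n by simp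
        moreover have "(?c - 1) mod int n = (y - 1) mod int n" using m1[of ?c y] cm ymod by simp
        ultimately show False using Py1 by blast
      qed
    qed
    then show ?thesis unfolding comp_def sp h1 unfolding Hf_def using nQ by simp
  next
    case F: False
    show ?thesis
    proof (cases "p mod int n = (y + 1) mod int n")
      case True
      then have sp: "sref n y p = p - 1" unfolding sref_cases[OF yr] using F by simp
      have pm1: "(p - 1) mod int n = y" using m1[of p "y+1"] True ymod by simp
      have pm2: "(p - 1 - 1) mod int n = (y - 1) mod int n" using m1[of "p-1" y] pm1 ymod by simp
      have "Hf ?P (p - 1) = p - 1" unfolding Hf_def using Py1[OF pm2] e_self[of ?P "p-1"] Py[OF pm1] by simp
      moreover have "Hf ?Q p = p - 1" unfolding Hf_def using Q pm1 by simp
      ultimately show ?thesis unfolding comp_def sp by simp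
    next
      case False
      then have sp: "sref n y p = p" unfolding sref_cases[OF yr] using F by simp
      have pm1: "(p - 1) mod int n \<noteq> y"
      proof
        assume "(p - 1) mod int n = y"
        then have "(p - 1 + 1) mod int n = (y + 1) mod int n" by (metis mod_add_left_eq ymod)
        then show False using False by simp
      qed
      have QP: "?Q (p - 1) \<longleftrightarrow> ?P (p - 1)" using Q pm1 by simp
      have "eP ?Q p = eP ?P p" if "\<not> ?P (p - 1)"
      proof (rule e_char)
        show "p \<le> eP ?P p" by (rule e_ge)
        fix t assume "p \<le> t" "t < eP ?P p"
        then show "?Q t" using Q e_in[of p t ?P] by auto
      next
        let ?c = "eP ?P p"
        show "\<not> ?Q ?c"
        proof
          assume "?Q ?c"
          then have cm: "?c mod int n = y" using Q e_not[OF gP] by auto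
          then have "?c \<noteq> p" using F by auto
          then have "p < ?c" using e_ge[of p ?P] by simp
          then have "?P (?c - 1)" using e_in[of p "?c - 1" ?P] by simp
          moreover have "(?c - 1) mod int n = (y - 1) mod int n" using m1[of ?c y] cm ymod by simp
          ultimately show False using Py1 by blast
        qed
      qed
      then show ?thesis unfolding comp_def sp Hf_def using QP by simp
    qed
  qed
qed

lemma Hf_empty: "Hf (inP n {}) = id"
proof
  fix p
  have "inP n {} = (\<lambda>_. False)" unfolding inP_def by auto
  then show "Hf (inP n {}) p = id p" unfolding Hf_def using e_self[of "inP n {}" p] by simp
qed

lemma Hword:
  assumes n: "n \<ge> 2"
  shows "set ys \<subseteq> Sset n \<Longrightarrow> set ys \<noteq> Sset n \<Longrightarrow> okl n ys \<Longrightarrow> word_prod n (rev ys) = Hf (inP n (set ys))"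
proof (induction ys)
  case Nil then show ?case using Hf_empty by simp
next
  case (Cons y zs)
  have zs: "set zs \<subseteq> Sset n" "set zs \<noteq> Sset n" "okl n zs" using Cons.prems by auto
  have "word_prod n (rev (y # zs)) = word_prod n (rev zs) \<circ> sref n y" by (simp add: wp_snoc)
  also have "\<dots> = Hf (inP n (set zs)) \<circ> sref n y" using Cons.IH[OF zs] by simp
  also have "\<dots> = Hf (inP n (insert y (set zs)))"
    by (rule H_cons[OF n]) (use Cons.prems in auto)
  finally show ?case by simp
qed



lemma key_pred:
  assumes n: "n > 0" and y: "0 \<le> y" "y < int n" and a: "0 \<le> a" "a < int n" "y \<noteq> a"
  shows "(((y - 1) mod int n) - a) mod int n = (y - a) mod int n - 1"
proof -
  have r: "(y - a) mod int n \<ge> 1"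
  proof -
    have "(y - a) mod int n \<noteq> 0"
    proof
      assume "(y - a) mod int n = 0"
      then have "int n dvd (y - a)" by (simp add: mod_eq_0_iff_dvd)
      moreover have "y - a \<noteq> 0" using a by simp
      ultimately have "\<bar>int n\<bar> \<le> \<bar>y - a\<bar>" using dvd_imp_le_int by blast
      then show False using y a by simp
    qed
    then show ?thesis using n by (smt (verit) pos_mod_sign of_nat_0_less_iff)
  qed
  have "(((y - 1) mod int n) - a) mod int n = ((y - 1) - a) mod int n" by (simp add: mod_diff_left_eq)
  also have "(y - 1) - a = (y - a) - 1" by simp
  also have "((y - a) - 1) mod int n = ((y - a) mod int n - 1) mod int n" by (simp add: mod_diff_left_eq)
  also have "\<dots> = (y - a) mod int n - 1" using r n by (smt (verit) pos_mod_bound mod_pos_pos_trivial of_nat_0_less_iff)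
  finally show ?thesis .
qed

lemma okl_sorted:
  assumes n: "n > 0" and a: "0 \<le> a" "a < int n"
  shows "set ys \<subseteq> Sset n - {a} \<Longrightarrow> distinct ys \<Longrightarrow> sorted (map (\<lambda>x. (x - a) mod int n) ys) \<Longrightarrow> okl n ys"
proof (induction ys)
  case Nil then show ?case by simp
next
  case (Cons y zs)
  have y: "0 \<le> y" "y < int n" "y \<noteq> a" using Cons.prems(1) unfolding Sset_def by auto
  have "(y - 1) mod int n \<notin> set zs"
  proof
    assume z: "(y - 1) mod int n \<in> set zs"
    then have "(y - a) mod int n \<le> (((y - 1) mod int n) - a) mod int n" using Cons.prems(3) by simp
    then show False using key_pred[OF n y(1,2) a y(3)] by simp
  qed
  then show ?case using Cons by auto
qed

lemma hX_list:
  assumes n: "n \<ge> 2" and X: "X \<subseteq> Sset n" "X \<noteq> Sset n"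
  shows "\<exists>xs a. a \<in> Sset n \<and> a \<notin> X \<and> set xs = X \<and> distinct xs \<and> sorted (map (\<lambda>x. (x - a) mod int n) xs)
           \<and> hX n X = word_prod n (rev xs)"
proof -
  define a where "a = (SOME a. a \<in> Sset n - X)"
  have "\<exists>a. a \<in> Sset n - X" using X by blast
  then have aS: "a \<in> Sset n - X" unfolding a_def by (rule someI_ex)
  define xs where "xs = sort_key (\<lambda>x. (x - a) mod int n) (sorted_list_of_set X)"
  have fin: "finite X" using X(1) finite_subset unfolding Sset_def by auto
  have "set xs = X" unfolding xs_def using fin by simp
  moreover have "distinct xs" unfolding xs_def using fin by simp
  moreover have "sorted (map (\<lambda>x. (x - a) mod int n) xs)" unfolding xs_def by simp
  moreover have "hX n X = word_prod n (rev xs)" unfolding hX_def a_def xs_def Let_def by simp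
  ultimately show ?thesis using aS by blast
qed

lemma hX_eq:
  assumes n: "n \<ge> 2" and X: "X \<subseteq> Sset n" "X \<noteq> Sset n"
  shows "hX n X = Hf (inP n X)"
proof -
  obtain xs a where xs: "a \<in> Sset n" "a \<notin> X" "set xs = X" "distinct xs" "sorted (map (\<lambda>x. (x - a) mod int n) xs)"
    "hX n X = word_prod n (rev xs)" using hX_list[OF n X] by blast
  have ar: "0 \<le> a" "a < int n" using xs(1) unfolding Sset_def by auto
  have "okl n xs" by (rule okl_sorted[of n a]) (use n ar xs X in auto)
  then show ?thesis using Hword[OF n, of xs] xs X by simp
qed



lemma parab_inW: "I \<subseteq> Sset n \<Longrightarrow> v \<in> parab n I \<Longrightarrow> inW n v"
  unfolding parab_def inW_def by blast

lemma b_of_eq: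
  assumes g: "good P" shows "eP P (bP P q) = eP P q"
  using blk_same(2)[OF g, of q "bP P q"] b_le[of P q] e_ge[of q P] by simp

lemma sref_blk:
  assumes n: "n \<ge> 2" and I: "I \<subseteq> Sset n" "I \<noteq> Sset n" and i: "i \<in> I"
  shows "bP (inP n I) (sref n i q) = bP (inP n I) q"
proof -
  let ?P = "inP n I"
  have g: "good ?P" by (rule good_proper[OF n I])
  have ir: "0 \<le> i" "i < int n" using i I unfolding Sset_def by auto
  show ?thesis
  proof (cases "q mod int n = i")
    case True
    then have s: "sref n i q = q + 1" unfolding sref_cases[OF ir] by simp
    have "?P q" unfolding inP_def using True i by simp
    then have "q + 1 \<le> eP ?P q" using e_not[OF g, of q] e_ge[of q ?P] by (metis add1_zle_eq order_le_less)
    then show ?thesis unfolding s using blk_same(1)[OF g, of q "q+1"] b_le[of ?P q] by simp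
  next
    case F: False
    show ?thesis
    proof (cases "q mod int n = (i + 1) mod int n")
      case True
      then have s: "sref n i q = q - 1" unfolding sref_cases[OF ir] using F by simp
      have "(q - 1) mod int n = ((i + 1) - 1) mod int n" using True by (metis mod_diff_left_eq)
      then have "?P (q - 1)" unfolding inP_def using i ir by simp
      then have "eP ?P (q - 1) \<noteq> q - 1" using e_not[OF g, of "q-1"] by metis
      then have "q \<le> eP ?P (q - 1)" using e_ge[of "q-1" ?P] by simp
      then show ?thesis unfolding s using blk_same(1)[OF g, of "q-1" q] b_le[of ?P "q-1"] by simp
    next
      case False
      then have s: "sref n i q = q" unfolding sref_cases[OF ir] using F by simp
      show ?thesis unfolding s ..
    qed
  qed
qed

lemma parab_blk:
  assumes n: "n \<ge> 2" and I: "I \<subseteq> Sset n" "I \<noteq> Sset n"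
  shows "set ws \<subseteq> I \<Longrightarrow> bP (inP n I) (word_prod n ws p) = bP (inP n I) p"
  by (induction ws) (auto simp: wp_Cons sref_blk[OF n I])

lemma parab_range:
  assumes n: "n \<ge> 2" and I: "I \<subseteq> Sset n" "I \<noteq> Sset n" and v: "v \<in> parab n I"
  shows "bP (inP n I) (v p) = bP (inP n I) p" "eP (inP n I) (v p) = eP (inP n I) p"
    "bP (inP n I) p \<le> v p" "v p \<le> eP (inP n I) p"
proof -
  let ?P = "inP n I"
  have g: "good ?P" by (rule good_proper[OF n I])
  obtain ws where ws: "set ws \<subseteq> I" "v = word_prod n ws" using v unfolding parab_def by blast
  show b: "bP ?P (v p) = bP ?P p" using parab_blk[OF n I ws(1)] ws(2) by simp
  show e: "eP ?P (v p) = eP ?P p" using b_of_eq[OF g, of "v p"] b b_of_eq[OF g, of p] by simp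
  show "bP ?P p \<le> v p" using b b_le[of ?P "v p"] by simp
  show "v p \<le> eP ?P p" using e e_ge[of "v p" ?P] by simp
qed

lemma parab_finite:
  assumes n: "n \<ge> 2" and I: "I \<subseteq> Sset n" "I \<noteq> Sset n"
  shows "finite (parab n I)"
proof -
  let ?P = "inP n I"
  obtain a where a: "a \<in> Sset n" "a \<notin> I" using I by blast
  have ar: "0 \<le> a" "a < int n" using a unfolding Sset_def by auto
  have n0: "n > 0" using n by simp
  define f where "f = (\<lambda>v::int\<Rightarrow>int. restrict v {0..<int n})"
  have "f ` parab n I \<subseteq> PiE {0..<int n} (\<lambda>p. {p - int n..p + int n})"
  proof
    fix u assume "u \<in> f ` parab n I"
    then obtain v where v: "v \<in> parab n I" "u = f v" by blast
    have "v p \<in> {p - int n..p + int n}" for p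
      using parab_range(3,4)[OF n I v(1), of p] e_bound[OF n0 ar a(2), of p] b_bound[OF n0 ar a(2), of p] by simp
    then have "\<forall>p\<in>{0..<int n}. v p \<in> {p - int n..p + int n}" by blast
    then show "u \<in> PiE {0..<int n} (\<lambda>p. {p - int n..p + int n})" unfolding v(2) f_def by (simp only: restrict_PiE_iff)
  qed
  moreover have "finite (PiE {0..<int n} (\<lambda>p. {p - int n..p + int n}))" by (rule finite_PiE) auto
  moreover have "inj_on f (parab n I)"
  proof
    fix v1 v2 assume v: "v1 \<in> parab n I" "v2 \<in> parab n I" "f v1 = f v2"
    have w: "inW n v1" "inW n v2" using parab_inW[OF I(1)] v by auto
    show "v1 = v2"
    proof
      fix p
      have pm: "p mod int n \<in> {0..<int n}" using n0 by simp
      have "f v1 (p mod int n) = f v2 (p mod int n)" using v(3) by simp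
      then have "v1 (p mod int n) = v2 (p mod int n)" using pm unfolding f_def by simp
      moreover have "v1 p = v1 (p mod int n) + int n * (p div int n)" using inW_period[OF w(1), of "p mod int n" "p div int n"] by simp
      moreover have "v2 p = v2 (p mod int n) + int n * (p div int n)" using inW_period[OF w(2), of "p mod int n" "p div int n"] by simp
      ultimately show "v1 p = v2 p" by simp
    qed
  qed
  ultimately have "finite (f ` parab n I)" "inj_on f (parab n I)" using finite_subset by auto
  then show ?thesis using finite_imageD by blast
qed

lemma dec_block:
  fixes f :: "int \<Rightarrow> int"
  assumes dec: "\<And>t. B \<le> t \<Longrightarrow> t < E \<Longrightarrow> f (t + 1) < f t"
    and rng: "\<And>t. B \<le> t \<Longrightarrow> t \<le> E \<Longrightarrow> B \<le> f t \<and> f t \<le> E"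
    and t: "B \<le> t" "t \<le> E"
  shows "f t = B + E - t"
proof -
  have up: "f (B + int j) \<le> E - int j" if "B + int j \<le> E" for j
    using that
  proof (induction j)
    case 0 then show ?case using rng[of B] by simp
  next
    case (Suc j)
    have "f (B + int j + 1) < f (B + int j)" using dec[of "B + int j"] Suc.prems by simp
    moreover have "B + int j + 1 = B + int (Suc j)" by simp
    ultimately have "f (B + int (Suc j)) < f (B + int j)" by metis
    moreover have "f (B + int j) \<le> E - int j" using Suc.IH Suc.prems by simp
    ultimately show ?case by simp
  qed
  have down: "f (E - int j) \<ge> B + int j" if "B \<le> E - int j" for j
    using that
  proof (induction j)
    case 0 then show ?case using rng[of E] by simp
  next
    case (Suc j)
    have "f (E - int j - 1 + 1) < f (E - int j - 1)" using dec[of "E - int j - 1"] Suc.prems by simp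
    moreover have "E - int j - 1 + 1 = E - int j" "E - int j - 1 = E - int (Suc j)" by simp_all
    ultimately have "f (E - int j) < f (E - int (Suc j))" by metis
    moreover have "f (E - int j) \<ge> B + int j" using Suc.IH Suc.prems by simp
    ultimately show ?case by simp
  qed
  have "f t \<le> E - (t - B)" using up[of "nat (t - B)"] t by simp
  moreover have "f t \<ge> B + (E - t)" using down[of "nat (E - t)"] t by simp
  ultimately show ?thesis by simp
qed

lemma max_is_W:
  assumes n: "n \<ge> 2" and I: "I \<subseteq> Sset n" "I \<noteq> Sset n" and w: "w \<in> parab n I"
    and mx: "\<forall>v\<in>parab n I. len n v \<le> len n w"
  shows "w = Wf (inP n I)"
proof
  fix p
  let ?P = "inP n I"
  have g: "good ?P" by (rule good_proper[OF n I])
  have wW: "inW n w" using parab_inW[OF I(1) w] .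
  have desc0: "w (i + 1) < w i" if "i \<in> I" for i
  proof (rule ccontr)
    assume "\<not> w (i + 1) < w i"
    moreover have iS: "i \<in> Sset n" using that I by auto
    ultimately have lt: "w i < w (i+1)" using len_step(2)[OF n wW iS] by simp
    have "w \<circ> sref n i \<in> parab n I"
    proof -
      obtain ws where "set ws \<subseteq> I" "w = word_prod n ws" using w unfolding parab_def by blast
      then show ?thesis unfolding parab_def using that by (intro CollectI exI[of _ "ws @ [i]"]) (auto simp: wp_snoc)
    qed
    then have "len n (w \<circ> sref n i) \<le> len n w" using mx by blast
    then show False using len_step(1)[OF n wW iS] lt by simp
  qed
  have desc: "w (t + 1) < w t" if "?P t" for t
  proof -
    define r where "r = t mod int n"
    have t: "t = r + int n * (t div int n)" unfolding r_def by simp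
    have "r \<in> I" using that unfolding inP_def r_def .
    then have "w (r + 1) < w r" by (rule desc0)
    moreover have "w t = w r + int n * (t div int n)" using inW_period[OF wW, of r "t div int n"] t by metis
    moreover have "w (t + 1) = w (r + 1) + int n * (t div int n)"
      using inW_period[OF wW, of "r + 1" "t div int n"] t by (metis add.commute add.left_commute)
    ultimately show ?thesis by simp
  qed
  let ?B = "bP ?P p" and ?E = "eP ?P p"
  have "w p = ?B + ?E - p"
  proof (rule dec_block[of ?B ?E w])
    fix t assume "?B \<le> t" "t < ?E"
    then have "?P t" using b_in[of ?P p t] e_in[of p t ?P] by (cases "t < p") auto
    then show "w (t + 1) < w t" by (rule desc)
  next
    fix t assume t: "?B \<le> t" "t \<le> ?E"
    then have "bP ?P t = ?B" "eP ?P t = ?E" using blk_same[OF g, of p t] by auto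
    then show "?B \<le> w t \<and> w t \<le> ?E" using parab_range(3,4)[OF n I w, of t] by simp
  next
    show "?B \<le> p" "p \<le> ?E" using b_le e_ge by auto
  qed
  then show "w p = Wf ?P p" unfolding Wf_def by simp
qed

lemma longest_eq:
  assumes n: "n \<ge> 2" and I: "I \<subseteq> Sset n" "I \<noteq> Sset n"
  shows "longest n I = Wf (inP n I)" "Wf (inP n I) \<in> parab n I"
proof -
  have fin: "finite (len n ` parab n I)" using parab_finite[OF n I] by simp
  have ne: "id \<in> parab n I" unfolding parab_def by (intro CollectI exI[of _ "[]"]) simp
  then have ne': "len n ` parab n I \<noteq> {}" by auto
  obtain w where w: "w \<in> parab n I" "len n w = Max (len n ` parab n I)"
    using Max_in[OF fin ne'] by auto
  have mx: "\<forall>v\<in>parab n I. len n v \<le> len n w" using w(2) Max_ge[OF fin] by simp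
  have wW: "w = Wf (inP n I)" by (rule max_is_W[OF n I w(1) mx])
  have "longest n I = w" unfolding longest_def
  proof (rule the_equality)
    show "w \<in> parab n I \<and> (\<forall>v\<in>parab n I. len n v \<le> len n w)" using w(1) mx by simp
    fix u assume "u \<in> parab n I \<and> (\<forall>v\<in>parab n I. len n v \<le> len n u)"
    then show "u = w" using max_is_W[OF n I] wW by blast
  qed
  then show "longest n I = Wf (inP n I)" using wW by simp
  show "Wf (inP n I) \<in> parab n I" using w(1) wW by simp
qed



lemma b_le_of:
  assumes g: "good P" and "c \<le> q" and h: "\<And>t. c \<le> t \<Longrightarrow> t < q \<Longrightarrow> P t"
  shows "bP P q \<le> c"
proof (rule ccontr)
  assume "\<not> bP P q \<le> c"
  then have "P (bP P q - 1)" using h[of "bP P q - 1"] b_le[of P q] by simp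
  then show False using b_not[OF g] by blast
qed

lemma W_le_e: "Wf P p \<le> eP P p" by (rule W_range(2))
lemma W_ge_b: "bP P p \<le> Wf P p" by (rule W_range(1))

lemma W_nonmem_le: "\<not> P p \<Longrightarrow> Wf P p \<le> p"
  using W_le_e[of P p] e_self[of P p] by simp

lemma W_start_ge: "\<not> P (p - 1) \<Longrightarrow> p \<le> Wf P p"
  using W_ge_b[of P p] b_self[of P p] by simp

lemma blk_in:
  assumes "bP P p \<le> t" "t < eP P p" shows "P t"
  using assms b_in[of P p t] e_in[of p t P] by (cases "t < p") auto

lemma rdes_core:
  assumes gP: "good P" and gQ: "good Q" and JX: "\<And>p. P (p - 1) \<Longrightarrow> Q p"
  shows "Wf P (Hf Q (i+1)) < Wf P (Hf Q i) \<longleftrightarrow> P (i - 1) \<or> (Q i \<and> \<not> Q (i - 1))"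
proof (cases "Q (i - 1)")
  case q1: True
  show ?thesis
  proof (cases "Q i")
    case True
    have "Hf Q i = i - 1" "Hf Q (i+1) = i" unfolding Hf_def using q1 True by auto
    then show ?thesis using W_desc_iff[OF gP, of "i - 1"] q1 by simp
  next
    case False
    have nP: "\<not> P (i - 1)" using JX False by blast
    have h: "Hf Q i = i - 1" "Hf Q (i+1) = eQ (i+1)" if "eQ = eP Q" for eQ unfolding Hf_def using q1 False that by auto
    let ?c = "eP Q (i+1)"
    have "\<not> Q ?c" by (rule e_not[OF gQ])
    then have "\<not> P (?c - 1)" using JX by blast
    then have "?c \<le> Wf P ?c" by (rule W_start_ge)
    moreover have "i + 1 \<le> ?c" by (rule e_ge)
    moreover have "Wf P (i - 1) \<le> i - 1" using W_nonmem_le[of P "i-1"] nP by simp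
    ultimately show ?thesis using h[OF refl] nP False by simp
  qed
next
  case q1: False
  show ?thesis
  proof (cases "Q i")
    case True
    have h: "Hf Q i = eP Q i" "Hf Q (i+1) = i" unfolding Hf_def using q1 True by auto
    let ?c = "eP Q i"
    have nc: "\<not> Q ?c" by (rule e_not[OF gQ])
    then have "\<not> P (?c - 1)" using JX by blast
    then have c1: "?c \<le> Wf P ?c" by (rule W_start_ge)
    have "Q t" if "i \<le> t" "t \<le> eP P i" for t
    proof (cases "t = i")
      case True then show ?thesis using \<open>Q i\<close> by simp
    next
      case False
      then have "P (t - 1)" using blk_in[of P i "t - 1"] that b_le[of P i] by simp
      then show ?thesis by (rule JX)
    qed
    then have "eP P i < ?c" using nc e_ge[of i Q] by force
    then show ?thesis using h c1 W_le_e[of P i] True q1 by simp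
  next
    case False
    have nP: "\<not> P (i - 1)" using JX False by blast
    have h: "Hf Q i = i" "Hf Q (i+1) = eP Q (i+1)" unfolding Hf_def using q1 False e_self[of Q i] by auto
    let ?c = "eP Q (i+1)"
    have nc: "\<not> Q ?c" by (rule e_not[OF gQ])
    then have "\<not> P (?c - 1)" using JX by blast
    then have c1: "?c \<le> Wf P ?c" by (rule W_start_ge)
    have "Q t" if "i + 1 \<le> t" "t \<le> eP P i" for t
    proof -
      have "P (t - 1)" using blk_in[of P i "t - 1"] that b_le[of P i] by simp
      then show ?thesis by (rule JX)
    qed
    then have "eP P i < ?c" using nc e_ge[of "i+1" Q] by force
    then show ?thesis using h c1 W_le_e[of P i] nP False q1 by simp
  qed
qed

lemma not_sub_core:
  assumes gP: "good P" and gQ: "good Q" and j0: "P (j0 - 1)" "\<not> Q j0"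
  shows "\<exists>j. P (j - 1) \<and> \<not> Q j \<and> Wf P (Hf Q j) < Wf P (Hf Q (j + 1))"
proof -
  let ?E = "eP P j0"
  define S where "S = {t \<in> {j0..?E}. \<not> Q t}"
  have fin: "finite S" unfolding S_def by (rule finite_subset[of _ "{j0..?E}"]) auto
  have ne: "j0 \<in> S" unfolding S_def using j0 e_ge[of j0 P] by simp
  define j where "j = Max S"
  have jS: "j \<in> S" unfolding j_def using fin ne Max_in by blast
  have j: "j0 \<le> j" "j \<le> ?E" "\<not> Q j" using jS unfolding S_def by auto
  have above: "Q t" if "j < t" "t \<le> ?E" for t
  proof (rule ccontr)
    assume "\<not> Q t"
    then have "t \<in> S" unfolding S_def using that j by auto
    then have "t \<le> j" unfolding j_def using fin Max_ge by blast
    then show False using that by simp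
  qed
  have eE: "eP P (j0 - 1) = ?E" using e_succ[OF gP j0(1)] by simp
  have blk: "eP P x = ?E" "bP P (j0 - 1) \<le> x" if "j0 - 1 \<le> x" "x \<le> ?E" for x
  proof -
    show "bP P (j0 - 1) \<le> x" using b_le[of P "j0-1"] that by simp
    then show "eP P x = ?E" using blk_same(2)[OF gP, of "j0 - 1" x] eE that by simp
  qed
  have Pj: "P (j - 1)"
  proof (cases "j = j0")
    case True then show ?thesis using j0 by simp
  next
    case False then show ?thesis using e_in[of j0 "j - 1" P] j by simp
  qed
  have h1: "Hf Q j \<in> {j - 1, j}" unfolding Hf_def using e_self[of Q j] j(3) by auto
  then have "Wf P (Hf Q j) \<le> ?E" using W_le_e[of P "Hf Q j"] blk(1)[of "Hf Q j"] j by auto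
  moreover have "Hf Q (j + 1) = eP Q (j + 1)" unfolding Hf_def using j(3) by simp
  moreover have "?E < eP Q (j + 1)"
  proof (rule ccontr)
    assume "\<not> ?E < eP Q (j + 1)"
    then have "Q (eP Q (j + 1))" using above[of "eP Q (j+1)"] e_ge[of "j+1" Q] by simp
    then show False using e_not[OF gQ] by blast
  qed
  moreover have "?E + 1 \<le> Wf P (eP Q (j + 1))"
  proof -
    have "bP P (?E + 1) = ?E + 1" using b_self[of P "?E + 1"] e_not[OF gP, of j0] by simp
    moreover have "bP P (?E + 1) \<le> bP P (eP Q (j + 1))" using b_mono[OF gP, of "?E + 1" "eP Q (j + 1)"] \<open>?E < eP Q (j + 1)\<close> by simp
    ultimately show ?thesis using W_ge_b[of P "eP Q (j+1)"] by simp
  qed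
  ultimately show ?thesis using Pj j(3) by (intro exI[of _ j]) simp
qed



lemma ident_core:
  assumes gP: "good P" and gQ: "good Q" and JX: "\<And>p. P (p - 1) \<Longrightarrow> Q p"
    and Y: "\<And>p. R p \<longleftrightarrow> P p \<or> Q (bP P p)" and gR: "good R"
  shows "Wf P (Hf Q p) = Hf R (Wf P (p - 1) + 1)"
proof (cases "Q (p - 1)")
  case True
  let ?q = "p - 1"
  let ?m = "Wf P ?q"
  have lhs: "Hf Q p = ?q" unfolding Hf_def using True by simp
  have "R ?m"
  proof (cases "bP P ?q < ?q")
    case True
    have "?m < eP P ?q" "bP P ?q \<le> ?m" unfolding Wf_def using True e_ge[of ?q P] by auto
    then have "P ?m" using blk_in by blast
    then show ?thesis using Y by simp
  next
    case False
    then have b: "bP P ?q = ?q" using b_le[of P ?q] by simp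
    then have m: "?m = eP P ?q" unfolding Wf_def by simp
    have "bP P ?m = ?q" using blk_same(1)[OF gP, of ?q ?m] b m e_ge[of ?q P] by simp
    then show ?thesis using Y \<open>Q (p - 1)\<close> by simp
  qed
  then have "Hf R (?m + 1) = ?m" unfolding Hf_def by simp
  then show ?thesis using lhs by simp
next
  case False
  let ?q = "p - 1"
  have nP: "\<not> P (?q - 1)" using JX False by blast
  have bq: "bP P ?q = ?q" by (rule b_self[of P ?q, OF nP])
  let ?E = "eP P ?q"
  have Wq: "Wf P ?q = ?E" unfolding Wf_def bq by simp
  have nPE: "\<not> P ?E" by (rule e_not[OF gP])
  have bE: "bP P ?E = ?q" using blk_same(1)[OF gP, of ?q ?E] bq e_ge[of ?q P] by simp
  have nRE: "\<not> R ?E" using Y nPE bE False by simp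
  have rhs: "Hf R (Wf P ?q + 1) = eP R (?E + 1)" unfolding Wq Hf_def using nRE by simp
  let ?c = "eP Q p"
  have lhs: "Hf Q p = ?c" unfolding Hf_def using False by simp
  have ncQ: "\<not> Q ?c" by (rule e_not[OF gQ])
  have ncP: "\<not> P (?c - 1)" using JX ncQ by blast
  have bc: "bP P ?c = ?c" by (rule b_self[of P ?c, OF ncP])
  have Wc: "Wf P ?c = eP P ?c" unfolding Wf_def bc by simp
  have QE: "Q t" if "p \<le> t" "t \<le> ?E" for t
  proof -
    have "P (t - 1)" using blk_in[of P ?q "t - 1"] that bq by simp
    then show ?thesis by (rule JX)
  qed
  have cE: "?E < ?c"
  proof (rule ccontr)
    assume "\<not> ?E < ?c"
    then have "Q ?c" using QE[of ?c] e_ge[of p Q] by simp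
    then show False using ncQ by simp
  qed
  have "eP R (?E + 1) = eP P ?c"
  proof (rule e_char)
    show "?E + 1 \<le> eP P ?c" using cE e_ge[of ?c P] by simp
    show "\<not> R (eP P ?c)"
    proof -
      have "bP P (eP P ?c) = ?c" using blk_same(1)[OF gP, of ?c "eP P ?c"] bc e_ge[of ?c P] by simp
      then show ?thesis using Y e_not[OF gP, of ?c] ncQ by simp
    qed
    fix t assume t: "?E + 1 \<le> t" "t < eP P ?c"
    show "R t"
    proof (cases "?c \<le> t")
      case True
      then have "P t" using blk_in[of P ?c t] bc t by simp
      then show ?thesis using Y by simp
    next
      case False
      have b1: "bP P (?E + 1) = ?E + 1" using b_self[of P "?E + 1"] nPE by simp
      have "?E + 1 \<le> bP P t" using b_mono[OF gP, of "?E + 1" t] b1 t by simp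
      moreover have "bP P t \<le> t" by (rule b_le)
      ultimately have "Q (bP P t)" using e_in[of p "bP P t" Q] False e_ge[of ?q P] by simp
      then show ?thesis using Y by simp
    qed
  qed
  then show ?thesis using lhs rhs Wc by simp
qed

lemma ldes_core:
  assumes gP: "good P" and gQ: "good Q" and JX: "\<And>p. P (p - 1) \<Longrightarrow> Q p"
    and Y: "\<And>p. R p \<longleftrightarrow> P p \<or> Q (bP P p)" and gR: "good R"
  shows "Wf P (Kf R (i+1) - 1) < Wf P (Kf R i - 1) \<longleftrightarrow> P i \<or> (R i \<and> \<not> R (i + 1))"
proof -
  have RP: "R t" if "P t" for t using Y that by simp
  have blkR: "R t" if "R i" "bP P i \<le> t" "t \<le> i" for t
  proof (cases "P i")
    case True
    show ?thesis
    proof (cases "t = i")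
      case True then show ?thesis using \<open>R i\<close> by simp
    next
      case False then show ?thesis using b_in[of P i t] that RP by simp
    qed
  next
    case False
    then have "Q (bP P i)" using Y that(1) by simp
    moreover have "bP P t = bP P i" using blk_same(1)[OF gP, of i t] that e_ge[of i P] by simp
    ultimately show ?thesis using Y by simp
  qed
  show ?thesis
  proof (cases "R i")
    case Ri: True
    show ?thesis
    proof (cases "R (i+1)")
      case True
      have "Kf R i = i + 1" "Kf R (i+1) = i + 2" unfolding Kf_def using Ri True by auto
      moreover have "i + 2 - 1 = i + 1" "i + 1 - 1 = i" by simp_all
      ultimately show ?thesis using W_desc_iff[OF gP, of i] True Ri by (simp only:) simp
    next
      case False
      let ?c = "bP R (i+1)"
      have k: "Kf R i = i + 1" "Kf R (i+1) = ?c" unfolding Kf_def using Ri False by auto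
      have "?c \<le> bP P i" using b_le_of[OF gR, of "bP P i" "i+1"] blkR[OF Ri] b_le[of P i] by simp
      moreover have "\<not> R (?c - 1)" by (rule b_not[OF gR])
      then have "\<not> P (?c - 1)" using RP by blast
      then have "Wf P (?c - 1) \<le> ?c - 1" by (rule W_nonmem_le)
      ultimately have "Wf P (?c - 1) < Wf P i" using W_ge_b[of P i] by simp
      then show ?thesis using k Ri False by simp
    qed
  next
    case nRi: False
    have nPi: "\<not> P i" using RP nRi by blast
    let ?c = "bP R i"
    have c: "?c \<le> i" by (rule b_le)
    have "\<not> R (?c - 1)" by (rule b_not[OF gR])
    then have "\<not> P (?c - 1)" using RP by blast
    then have Wc: "Wf P (?c - 1) \<le> ?c - 1" by (rule W_nonmem_le)
    show ?thesis
    proof (cases "R (i+1)")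
      case True
      have k: "Kf R i = ?c" "Kf R (i+1) = i + 2" unfolding Kf_def using nRi True by auto
      have "i + 1 \<le> Wf P (i + 1)" using W_start_ge[of P "i+1"] nPi by simp
      moreover have "i + 2 - 1 = i + 1" by simp
      ultimately show ?thesis unfolding k using Wc c nRi nPi by (simp only:) simp
    next
      case False
      have k: "Kf R i = ?c" "Kf R (i+1) = i + 1" unfolding Kf_def using nRi False b_self[of R "i+1"] by auto
      have "?c \<le> bP P i" using b_le_of[OF gR, of "bP P i" i] b_in[of P i] RP b_le[of P i] by simp
      then have "Wf P (?c - 1) < Wf P i" using Wc W_ge_b[of P i] by simp
      then show ?thesis using k nRi nPi by simp
    qed
  qed
qed



lemma key_inc:
  assumes n: "n > 0" and a: "0 \<le> a" "a < int n" and y: "0 \<le> y" "y < int n"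
  shows "(\<forall>d'. 1 \<le> d' \<and> d' \<le> d \<longrightarrow> (y + int d') mod int n \<noteq> a) \<Longrightarrow>
         (y + int d - a) mod int n = (y - a) mod int n + int d"
proof (induction d)
  case 0 then show ?case by simp
next
  case (Suc d)
  have IH: "(y + int d - a) mod int n = (y - a) mod int n + int d" using Suc by auto
  define K where "K = (y + int d - a) mod int n"
  have K: "0 \<le> K" "K < int n" unfolding K_def using n by auto
  have e: "y + int (Suc d) - a = (y + int d - a) + 1" by simp
  have "(y + int (Suc d) - a) mod int n = (K + 1) mod int n" unfolding e K_def by (simp add: mod_add_left_eq)
  moreover have "K + 1 \<noteq> int n"
  proof
    assume "K + 1 = int n"
    then have "(y + int (Suc d) - a) mod int n = 0" using calculation by simp
    then have "(y + int (Suc d)) mod int n = a mod int n" by (simp add: mod_eq_dvd_iff mod_eq_0_iff_dvd)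
    then show False using Suc.prems a by auto
  qed
  ultimately have "(y + int (Suc d) - a) mod int n = K + 1" using K by simp
  then show ?case using IH unfolding K_def by simp
qed

lemma Wf_empty: "Wf (inP n {}) = id"
proof
  fix p
  have e: "inP n {} = (\<lambda>_. False)" unfolding inP_def by auto
  show "Wf (inP n {}) p = id p" unfolding Wf_def e using b_self[of "\<lambda>_. False" p] e_self[of "\<lambda>_. False" p] by simp
qed

lemma len_suffix:
  assumes n: "n \<ge> 2" and I: "I \<subseteq> Sset n" "I \<noteq> Sset n" and X: "X \<subseteq> Sset n" "X \<noteq> Sset n"
    and JX: "\<And>p. inP n I (p - 1) \<Longrightarrow> inP n X p"
    and aS: "a \<in> Sset n" "a \<notin> X"
  shows "set ys \<subseteq> X \<Longrightarrow> distinct ys \<Longrightarrow> sorted (map (\<lambda>x. (x - a) mod int n) ys) \<Longrightarrow>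
    (\<forall>y\<in>set ys. \<forall>x\<in>X. (y - a) mod int n < (x - a) mod int n \<longrightarrow> x \<in> set ys) \<Longrightarrow>
    len n (Wf (inP n I) \<circ> word_prod n (rev ys)) = len n (Wf (inP n I)) + length ys"
proof (induction ys)
  case Nil then show ?case by simp
next
  case (Cons y zs)
  let ?key = "\<lambda>x. (x - a) mod int n"
  let ?P = "inP n I" and ?Z = "inP n (set zs)"
  have n0: "n > 0" using n by simp
  have ar: "0 \<le> a" "a < int n" using aS unfolding Sset_def by auto
  have gP: "good ?P" by (rule good_proper[OF n I])
  have yX: "y \<in> X" using Cons.prems by simp
  have yr: "0 \<le> y" "y < int n" using yX X unfolding Sset_def by auto
  have zsX: "set zs \<subseteq> X" using Cons.prems by simp
  have sortz: "sorted (map ?key zs)" using Cons.prems by simp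
  have ykz: "?key y \<le> ?key z" if "z \<in> set zs" for z using Cons.prems(3) that by simp
  have keyinj: "x = x'" if "x \<in> Sset n" "x' \<in> Sset n" "?key x = ?key x'" for x x'
  proof -
    have "(x - a) mod int n = (x' - a) mod int n" using that by simp
    then have "x mod int n = x' mod int n" by (simp add: mod_eq_dvd_iff)
    then show ?thesis using that unfolding Sset_def by simp
  qed
  have upz: "\<forall>z\<in>set zs. \<forall>x\<in>X. ?key z < ?key x \<longrightarrow> x \<in> set zs"
  proof (intro ballI impI)
    fix z x assume z: "z \<in> set zs" and x: "x \<in> X" and lt: "?key z < ?key x"
    then have "?key y < ?key x" using ykz[OF z] by simp
    then have "x \<in> set (y # zs)" using Cons.prems(4) x by simp
    moreover have "x \<noteq> y" using \<open>?key y < ?key x\<close> by auto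
    ultimately show "x \<in> set zs" by simp
  qed
  have IH: "len n (Wf ?P \<circ> word_prod n (rev zs)) = len n (Wf ?P) + length zs"
  proof -
    have "distinct zs" using Cons.prems(2) by simp
    then show ?thesis by (rule Cons.IH[OF zsX _ sortz upz])
  qed
  have okl: "okl n (y # zs)"
    by (rule okl_sorted[OF n0 ar]) (use Cons.prems X aS in auto)
  have zsS: "set zs \<subseteq> Sset n" "set zs \<noteq> Sset n" using zsX X by auto
  have Hz: "word_prod n (rev zs) = Hf ?Z" using Hword[OF n zsS] okl by simp
  have WP: "inW n (Wf ?P)" using parab_inW[OF I(1) longest_eq(2)[OF n I]] .
  have Wz: "inW n (word_prod n (rev zs))" unfolding inW_def using zsS by (intro exI[of _ "rev zs"]) simp
  let ?u = "Wf ?P \<circ> word_prod n (rev zs)"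
  have uW: "inW n ?u" by (rule inW_comp[OF WP Wz])
  have yS: "y \<in> Sset n" using yX X by auto
  have nZy: "\<not> ?Z y" unfolding inP_def using yr Cons.prems(2) by simp
  have nZy1: "\<not> ?Z (y - 1)" unfolding inP_def using okl by simp
  have Hy: "Hf ?Z y = y" unfolding Hf_def using nZy nZy1 e_self[of ?Z y] by simp
  have Hy1: "Hf ?Z (y + 1) = eP ?Z (y + 1)" unfolding Hf_def using nZy by simp
  have inZ: "?Z t" if t: "y + 1 \<le> t" "t \<le> eP ?P y" for t
  proof -
    have PX: "inP n X t'" if "y + 1 \<le> t'" "t' \<le> eP ?P y" for t'
    proof -
      have "?P (t' - 1)" using blk_in[of ?P y "t' - 1"] that b_le[of ?P y] by simp
      then show ?thesis by (rule JX)
    qed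
    define d where "d = nat (t - y)"
    have td: "t = y + int d" unfolding d_def using t by simp
    have "(\<forall>d'. 1 \<le> d' \<and> d' \<le> d \<longrightarrow> (y + int d') mod int n \<noteq> a)"
    proof (intro allI impI)
      fix d' assume "1 \<le> d' \<and> d' \<le> d"
      then have "inP n X (y + int d')" using PX[of "y + int d'"] t td by simp
      then show "(y + int d') mod int n \<noteq> a" using aS unfolding inP_def by auto
    qed
    then have k: "(t - a) mod int n = ?key y + int d" using key_inc[OF n0 ar yr] td by simp
    have d0: "d > 0" using t td by simp
    have tX: "t mod int n \<in> X" using PX[of t] t unfolding inP_def by simp
    have kt: "?key (t mod int n) = (t - a) mod int n" by (simp add: mod_diff_left_eq)
    have "?key y < ?key (t mod int n)" using kt k d0 by simp
    then have "t mod int n \<in> set (y # zs)" using Cons.prems(4) tX by simp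
    moreover have "t mod int n \<noteq> y" using \<open>?key y < ?key (t mod int n)\<close> by auto
    ultimately show "?Z t" unfolding inP_def by simp
  qed
  let ?c = "eP ?Z (y + 1)"
  have gZ: "good ?Z" by (rule good_proper[OF n zsS])
  have cE: "eP ?P y < ?c"
  proof (rule ccontr)
    assume "\<not> eP ?P y < ?c"
    then have "?Z ?c" using inZ[of ?c] e_ge[of "y+1" ?Z] by simp
    then show False using e_not[OF gZ] by blast
  qed
  have "eP ?P y + 1 \<le> Wf ?P ?c"
  proof -
    have b1: "bP ?P (eP ?P y + 1) = eP ?P y + 1" using b_self[of ?P "eP ?P y + 1"] e_not[OF gP, of y] by simp
    have "bP ?P (eP ?P y + 1) \<le> bP ?P ?c" using b_mono[OF gP, of "eP ?P y + 1" ?c] cE by simp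
    then show ?thesis using b1 W_ge_b[of ?P ?c] by simp
  qed
  then have asc: "?u y < ?u (y + 1)" unfolding comp_def Hz Hy Hy1 using W_le_e[of ?P y] by simp
  have "Wf ?P \<circ> word_prod n (rev (y # zs)) = ?u \<circ> sref n y" by (simp add: wp_snoc comp_assoc)
  then have "len n (Wf ?P \<circ> word_prod n (rev (y # zs))) = len n ?u + 1"
    using len_step(1)[OF n uW yS] asc by simp
  then show ?case using IH by (simp add: comp_def)
qed

lemma len_main:
  assumes n: "n \<ge> 2" and I: "I \<subseteq> Sset n" "I \<noteq> Sset n" and X: "X \<subseteq> Sset n" "X \<noteq> Sset n"
    and JX: "\<And>p. inP n I (p - 1) \<Longrightarrow> inP n X p"
  shows "len n (Wf (inP n I) \<circ> hX n X) = len n (Wf (inP n I)) + len n (hX n X)"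
proof -
  obtain xs a where xs: "a \<in> Sset n" "a \<notin> X" "set xs = X" "distinct xs" "sorted (map (\<lambda>x. (x - a) mod int n) xs)"
    "hX n X = word_prod n (rev xs)" using hX_list[OF n X] by blast
  have A: "len n (Wf (inP n I) \<circ> hX n X) = len n (Wf (inP n I)) + length xs"
    using len_suffix[OF n I X JX xs(1,2), of xs] xs by simp
  have E: "{} \<subseteq> Sset n" "{} \<noteq> Sset n" using n unfolding Sset_def by auto
  have JE: "inP n {} (p - 1) \<Longrightarrow> inP n X p" for p unfolding inP_def by simp
  have B: "len n (Wf (inP n {}) \<circ> hX n X) = len n (Wf (inP n {})) + length xs"
    using len_suffix[OF n E X JE xs(1,2), of xs] xs by simp
  have l0: "len n id = 0" using len_eq[OF n inW_id] invn_id by simp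
  have "len n (hX n X) = length xs" using B l0 unfolding Wf_empty by simp
  then show ?thesis using A by simp
qed



lemma main_setup:
  assumes n: "n \<ge> 2" and I: "I \<subset> Sset n"
  shows "tau n ` I \<subseteq> Sset n" "tau n ` I \<noteq> Sset n"
proof -
  show J: "tau n ` I \<subseteq> Sset n" unfolding tau_def Sset_def using n by auto
  obtain i0 where i0: "i0 \<in> Sset n" "i0 \<notin> I" using I by blast
  have "(i0 + 1) mod int n \<notin> tau n ` I"
  proof
    assume "(i0 + 1) mod int n \<in> tau n ` I"
    then have "inP n (tau n ` I) (i0 + 1)" unfolding inP_def by simp
    then have "inP n I i0" using inP_tau[of I n "i0 + 1"] I n by auto
    then show False using i0 inP_Sset by blast
  qed
  moreover have "(i0 + 1) mod int n \<in> Sset n" unfolding Sset_def using n by simp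
  ultimately show "tau n ` I \<noteq> Sset n" by blast
qed

lemma F_period:
  assumes "inW n F" shows "F (i mod int n) < F (i mod int n + 1) \<longleftrightarrow> F i < F (i + 1)"
proof -
  have i: "i = i mod int n + int n * (i div int n)" by simp
  have "F i = F (i mod int n) + int n * (i div int n)" using inW_period[OF assms, of "i mod int n" "i div int n"] by simp
  moreover have "F (i + 1) = F (i mod int n + 1) + int n * (i div int n)"
    using inW_period[OF assms, of "i mod int n + 1" "i div int n"] by (metis add.commute add.left_commute i)
  ultimately show ?thesis by simp
qed

theorem lemma10p6:
  fixes n :: nat and I X :: "int set"
  assumes "n \<ge> 2"
    and "I \<subset> Sset n"
    and "X \<subset> Sset n"
  shows "(tau n ` I \<subseteq> X \<longleftrightarrow> tau n ` I \<subseteq> rdes n (longest n I \<circ> hX n X))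
       \<and> (tau n ` I \<subseteq> X \<longrightarrow>
           len n (longest n I \<circ> hX n X) = len n (longest n I) + len n (hX n X)
         \<and> (\<exists>!Y. Y \<subset> Sset n \<and> longest n I \<circ> hX n X = hX n Y \<circ> longest n (tau n ` I))
         \<and> (\<forall>Y. Y \<subset> Sset n \<and> longest n I \<circ> hX n X = hX n Y \<circ> longest n (tau n ` I) \<longrightarrow>
               (\<forall>A \<in> tau_components n I.
                   (X \<inter> A = tau n ` I \<inter> A \<and> Y \<inter> A = I \<inter> A)
                 \<or> (X \<inter> A = A \<and> Y \<inter> A = A))
             \<and> ldes n (hX n Y \<circ> longest n (tau n ` I))
                 = I \<union> {y \<in> Y. (y + 1) mod int n \<notin> Y})
         \<and> rdes n (longest n I \<circ> hX n X) = tau n ` I \<union> {x \<in> X. (x - 1) mod int n \<notin> X})"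
proof -
  note n = assms(1)
  have n0: "n > 0" using n by simp
  have I: "I \<subseteq> Sset n" "I \<noteq> Sset n" using assms(2) by auto
  have X: "X \<subseteq> Sset n" "X \<noteq> Sset n" using assms(3) by auto
  define J where "J = tau n ` I"
  have J: "J \<subseteq> Sset n" "J \<noteq> Sset n" using main_setup[OF n assms(2)] unfolding J_def by auto
  define P where "P = inP n I"
  define Q where "Q = inP n X"
  define PJ where "PJ = inP n J"
  have gP: "good P" unfolding P_def by (rule good_proper[OF n I])
  have gQ: "good Q" unfolding Q_def by (rule good_proper[OF n X])
  have gJ: "good PJ" unfolding PJ_def by (rule good_proper[OF n J])
  have PJP: "PJ p \<longleftrightarrow> P (p - 1)" for p unfolding PJ_def P_def J_def using inP_tau[OF I(1) n0] by simp
  have Pper: "P (x + int n) = P x" for x unfolding P_def by (rule inP_period1)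
  have Qper: "Q (x + int n) = Q x" for x unfolding Q_def by (rule inP_period1)
  have wI: "longest n I = Wf P" unfolding P_def by (rule longest_eq(1)[OF n I])
  have wJ: "longest n J = Wf PJ" unfolding PJ_def by (rule longest_eq(1)[OF n J])
  have hX: "hX n X = Hf Q" unfolding Q_def by (rule hX_eq[OF n X])
  define F where "F = longest n I \<circ> hX n X"
  have Fe: "F p = Wf P (Hf Q p)" for p unfolding F_def wI hX by simp
  have W1: "inW n (Wf P)" unfolding P_def by (rule parab_inW[OF I(1) longest_eq(2)[OF n I]])
  have W2: "inW n (hX n X)"
  proof -
    obtain xs a where "set xs = X" "hX n X = word_prod n (rev xs)" using hX_list[OF n X] by blast
    then show ?thesis unfolding inW_def using X by (intro exI[of _ "rev xs"]) auto
  qed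
  have FW: "inW n F" unfolding F_def wI by (rule inW_comp[OF W1 W2])
  have rdesF: "rdes n F = {i \<in> Sset n. F (i+1) < F i}" by (rule rdes_char[OF n FW])
  have JX_iff: "J \<subseteq> X \<longleftrightarrow> (\<forall>p. P (p - 1) \<longrightarrow> Q p)"
  proof
    assume JX: "J \<subseteq> X"
    show "\<forall>p. P (p - 1) \<longrightarrow> Q p"
    proof (intro allI impI)
      fix p assume "P (p - 1)"
      then have "PJ p" using PJP by simp
      then have "p mod int n \<in> J" unfolding PJ_def inP_def .
      then show "Q p" unfolding Q_def inP_def using JX by blast
    qed
  next
    assume h: "\<forall>p. P (p - 1) \<longrightarrow> Q p"
    show "J \<subseteq> X"
    proof
      fix j assume jJ: "j \<in> J"
      then have "PJ j" unfolding PJ_def using inP_Sset[of j n J] J by auto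
      then have "Q j" using h PJP by blast
      then show "j \<in> X" unfolding Q_def using inP_Sset[of j n X] jJ J by auto
    qed
  qed
  have rdes_eq: "rdes n F = J \<union> {x \<in> X. (x - 1) mod int n \<notin> X}" if JX: "\<And>p. P (p - 1) \<Longrightarrow> Q p"
  proof -
    have "i \<in> rdes n F \<longleftrightarrow> i \<in> J \<union> {x \<in> X. (x - 1) mod int n \<notin> X}" if iS: "i \<in> Sset n" for i
    proof -
      have "i \<in> rdes n F \<longleftrightarrow> P (i - 1) \<or> (Q i \<and> \<not> Q (i - 1))"
        unfolding rdesF using iS rdes_core[OF gP gQ JX, of i] Fe by simp
      moreover have "P (i - 1) \<longleftrightarrow> i \<in> J" using PJP[of i] inP_Sset[OF iS, of J] unfolding PJ_def by simp
      moreover have "Q i \<longleftrightarrow> i \<in> X" using inP_Sset[OF iS, of X] unfolding Q_def by simp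
      moreover have "Q (i - 1) \<longleftrightarrow> (i - 1) mod int n \<in> X" unfolding Q_def inP_def by simp
      ultimately show ?thesis by auto
    qed
    moreover have "rdes n F \<subseteq> Sset n" unfolding rdes_def by auto
    moreover have "J \<union> {x \<in> X. (x - 1) mod int n \<notin> X} \<subseteq> Sset n" using J X by auto
    ultimately show ?thesis by blast
  qed
  have part_E: "J \<subseteq> X \<longleftrightarrow> J \<subseteq> rdes n F"
  proof
    assume "J \<subseteq> X"
    then have "\<And>p. P (p - 1) \<Longrightarrow> Q p" using JX_iff by blast
    then show "J \<subseteq> rdes n F" using rdes_eq by blast
  next
    assume JR: "J \<subseteq> rdes n F"
    show "J \<subseteq> X"
    proof (rule ccontr)
      assume "\<not> J \<subseteq> X"
      then obtain j0 where "P (j0 - 1)" "\<not> Q j0" using JX_iff by blast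
      then obtain j where j: "P (j - 1)" "\<not> Q j" "Wf P (Hf Q j) < Wf P (Hf Q (j + 1))"
        using not_sub_core[OF gP gQ] by blast
      define i where "i = j mod int n"
      have iS: "i \<in> Sset n" unfolding i_def Sset_def using n by simp
      have "PJ j" using PJP j(1) by simp
      then have "i \<in> J" unfolding i_def PJ_def inP_def .
      moreover have "F i < F (i + 1)" using F_period[OF FW, of j] j(3) Fe unfolding i_def by simp
      then have "i \<notin> rdes n F" unfolding rdesF by auto
      ultimately show False using JR by blast
    qed
  qed
  show ?thesis
    unfolding J_def[symmetric] F_def[symmetric]
  proof (intro conjI impI)
    show "J \<subseteq> X \<longleftrightarrow> J \<subseteq> rdes n F" by (rule part_E)
  next
    assume JXs: "J \<subseteq> X"
    then have JX: "\<And>p. P (p - 1) \<Longrightarrow> Q p" using JX_iff by blast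
    show "rdes n F = J \<union> {x \<in> X. (x - 1) mod int n \<notin> X}" by (rule rdes_eq[OF JX])
    show "len n F = len n (longest n I) + len n (hX n X)"
      unfolding F_def wI P_def by (rule len_main[OF n I X JX[unfolded P_def Q_def]])
    define R where "R p \<longleftrightarrow> P p \<or> Q (bP P p)" for p
    define Y where "Y = {y \<in> Sset n. R y}"
    have Rper: "R (x + int n) = R x" for x unfolding R_def using Pper Qper b_period[of P n, OF Pper gP] by simp
    have YR: "inP n Y p \<longleftrightarrow> R p" for p
    proof -
      have "p mod int n \<in> Sset n" unfolding Sset_def using n by simp
      then have "inP n Y p \<longleftrightarrow> R (p mod int n)" unfolding inP_def Y_def by simp
      also have "\<dots> \<longleftrightarrow> R p" using periodic_mod[of R n p] Rper by metis
      finally show ?thesis .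
    qed
    have YS: "Y \<subseteq> Sset n" unfolding Y_def by auto
    have YneS: "Y \<noteq> Sset n"
    proof -
      obtain a where a: "a \<in> Sset n" "a \<notin> X" using X by blast
      have nQa: "\<not> Q a" unfolding Q_def using inP_Sset[OF a(1)] a(2) by simp
      then have nP: "\<not> P (a - 1)" using JX by blast
      have ba: "bP P a = a" by (rule b_self[of P a, OF nP])
      let ?E = "eP P a"
      have "bP P ?E = a" using blk_same(1)[OF gP, of a ?E] ba e_ge[of a P] by simp
      then have "\<not> R ?E" unfolding R_def using e_not[OF gP, of a] nQa by simp
      then have "\<not> inP n Y ?E" using YR by simp
      moreover have "?E mod int n \<in> Sset n" unfolding Sset_def using n by simp
      ultimately show ?thesis unfolding inP_def by blast
    qed
    have gR: "good R" using good_proper[OF n YS YneS] YR by (simp add: fun_eq_iff[symmetric] YR[abs_def])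
    have hY: "hX n Y = Hf R" using hX_eq[OF n YS YneS] YR by (simp add: YR[abs_def])
    have ident: "F = hX n Y \<circ> longest n J"
    proof
      fix p
      have "F p = Hf R (Wf P (p - 1) + 1)" unfolding Fe by (rule ident_core[OF gP gQ JX R_def gR])
      also have "Wf P (p - 1) + 1 = Wf PJ p" using shift_blocks(3)[of PJ P p] PJP by simp
      finally show "F p = (hX n Y \<circ> longest n J) p" unfolding hY wJ by simp
    qed
    have uniq: "Y' = Y" if Y': "Y' \<subset> Sset n" "F = hX n Y' \<circ> longest n J" for Y'
    proof -
      have Y'S: "Y' \<subseteq> Sset n" "Y' \<noteq> Sset n" using Y' by auto
      have "hX n Y' \<circ> Wf PJ = hX n Y \<circ> Wf PJ" using Y'(2) ident wJ by simp
      then have "hX n Y' = hX n Y"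
      proof -
        assume e: "hX n Y' \<circ> Wf PJ = hX n Y \<circ> Wf PJ"
        show ?thesis
        proof
          fix p
          have "hX n Y' (Wf PJ (Wf PJ p)) = hX n Y (Wf PJ (Wf PJ p))" using e by (metis comp_apply)
          then show "hX n Y' p = hX n Y p" using W_invol[OF gJ] by simp
        qed
      qed
      then have H: "Hf (inP n Y') = Hf (inP n Y)" using hX_eq[OF n Y'S] hX_eq[OF n YS YneS] by simp
      have "y \<in> Y' \<longleftrightarrow> y \<in> Y" if yS: "y \<in> Sset n" for y
      proof -
        have "y \<in> Y' \<longleftrightarrow> Hf (inP n Y') (y + 1) = y" using H_le_iff inP_Sset[OF yS] by metis
        also have "\<dots> \<longleftrightarrow> Hf (inP n Y) (y + 1) = y" using H by simp
        also have "\<dots> \<longleftrightarrow> y \<in> Y" using H_le_iff inP_Sset[OF yS] by metis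
        finally show ?thesis .
      qed
      then show ?thesis using Y'S YS by blast
    qed
    have YsS: "Y \<subset> Sset n" using YS YneS by auto
    show "\<exists>!Y. Y \<subset> Sset n \<and> F = hX n Y \<circ> longest n J"
      using YsS ident uniq by blast
    show "\<forall>Y'. Y' \<subset> Sset n \<and> F = hX n Y' \<circ> longest n J \<longrightarrow>
               (\<forall>A \<in> tau_components n I.
                   (X \<inter> A = J \<inter> A \<and> Y' \<inter> A = I \<inter> A)
                 \<or> (X \<inter> A = A \<and> Y' \<inter> A = A))
             \<and> ldes n (hX n Y' \<circ> longest n J) = I \<union> {y \<in> Y'. (y + 1) mod int n \<notin> Y'}"
    proof (intro allI impI)
      fix Y' assume Y': "Y' \<subset> Sset n \<and> F = hX n Y' \<circ> longest n J"
      then have YY: "Y' = Y" using uniq by blast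
      show "(\<forall>A \<in> tau_components n I.
                   (X \<inter> A = J \<inter> A \<and> Y' \<inter> A = I \<inter> A)
                 \<or> (X \<inter> A = A \<and> Y' \<inter> A = A))
             \<and> ldes n (hX n Y' \<circ> longest n J) = I \<union> {y \<in> Y'. (y + 1) mod int n \<notin> Y'}"
        unfolding YY
      proof (intro conjI ballI)
        fix A assume "A \<in> tau_components n I"
        then obtain a k where a: "a \<in> Sset n" "A = {(a + int j) mod int n | j. j \<le> k}"
          "\<forall>j < k. (a + int j) mod int n \<in> I" "(a + int k) mod int n \<notin> I" "(a - 1) mod int n \<notin> I"
          unfolding tau_components_def by blast
        have Pin: "P (a + int j)" if "j < k" for j using a(3) that unfolding P_def inP_def by simp
        have nPa: "\<not> P (a - 1)" using a(5) unfolding P_def inP_def .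
        have bA: "bP P (a + int j) = a" if "j \<le> k" for j
        proof (rule b_char)
          show "a \<le> a + int j" by simp
          show "\<not> P (a - 1)" by (rule nPa)
          fix t assume t: "a \<le> t" "t < a + int j"
          then have "t = a + int (nat (t - a))" "nat (t - a) < k" using that by auto
          then show "P t" using Pin by metis
        qed
        have memX: "(a + int j) mod int n \<in> X \<longleftrightarrow> Q (a + int j)" for j unfolding Q_def inP_def by simp
        have memJ: "(a + int j) mod int n \<in> J \<longleftrightarrow> P (a + int j - 1)" for j using PJP unfolding PJ_def inP_def by simp
        have memI: "(a + int j) mod int n \<in> I \<longleftrightarrow> P (a + int j)" for j unfolding P_def inP_def by simp
        have memY: "(a + int j) mod int n \<in> Y \<longleftrightarrow> R (a + int j)" for j using YR unfolding inP_def by simp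
        have Jin: "P (a + int j - 1)" if "1 \<le> j" "j \<le> k" for j
          using Pin[of "j - 1"] that by (simp add: of_nat_diff algebra_simps)
        show "(X \<inter> A = J \<inter> A \<and> Y \<inter> A = I \<inter> A) \<or> (X \<inter> A = A \<and> Y \<inter> A = A)"
        proof (cases "Q a")
          case True
          have "\<forall>j \<le> k. Q (a + int j) \<and> R (a + int j)"
          proof (intro allI impI conjI)
            fix j assume j: "j \<le> k"
            show "R (a + int j)" unfolding R_def using bA[OF j] True by simp
            show "Q (a + int j)"
            proof (cases "j = 0")
              case True then show ?thesis using \<open>Q a\<close> by simp
            next
              case False then show ?thesis using JX Jin[of j] j by simp
            qed
          qed
          then have "X \<inter> A = A \<and> Y \<inter> A = A" unfolding a(2) using memX memY by blast
          then show ?thesis by blast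
        next
          case False
          have "\<forall>j \<le> k. (Q (a + int j) \<longleftrightarrow> P (a + int j - 1)) \<and> (R (a + int j) \<longleftrightarrow> P (a + int j))"
          proof (intro allI impI conjI)
            fix j assume j: "j \<le> k"
            show "R (a + int j) \<longleftrightarrow> P (a + int j)" unfolding R_def using bA[OF j] False by simp
            show "Q (a + int j) \<longleftrightarrow> P (a + int j - 1)"
            proof (cases "j = 0")
              case True then show ?thesis using False nPa by simp
            next
              case F: False then show ?thesis using JX Jin[of j] j by simp
            qed
          qed
          then have "X \<inter> A = J \<inter> A \<and> Y \<inter> A = I \<inter> A" unfolding a(2) using memX memY memJ memI by blast
          then show ?thesis by blast
        qed
      next
        obtain ws where ws: "set ws \<subseteq> Sset n" "word_prod n ws = F" using FW unfolding inW_def by blast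
        define g where "g = word_prod n (rev ws)"
        have vF: "hX n Y \<circ> longest n J = F" using ident by simp
        have gK: "g p = Wf PJ (Kf R p)" for p
        proof -
          have "F (Wf PJ (Kf R p)) = p" using ident unfolding hY wJ using W_invol[OF gJ] HK[OF gR] by simp
          then have "g (F (Wf PJ (Kf R p))) = g p" by simp
          moreover have "g (F x) = x" for x unfolding g_def using wp_rev_inv[OF n, of ws x] ws(2) by simp
          ultimately show ?thesis by simp
        qed
        have ld: "ldes n F = {i \<in> Sset n. g (i+1) < g i}" unfolding g_def using ldes_char[OF n ws(1)] ws(2) by simp
        have "i \<in> ldes n F \<longleftrightarrow> i \<in> I \<union> {y \<in> Y. (y + 1) mod int n \<notin> Y}" if iS: "i \<in> Sset n" for i
        proof -
          have "g (i+1) < g i \<longleftrightarrow> Wf P (Kf R (i+1) - 1) < Wf P (Kf R i - 1)"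
          proof -
            have s: "Wf PJ p = Wf P (p - 1) + 1" for p using shift_blocks(3)[of PJ P] PJP by simp
            show ?thesis unfolding gK s by (simp only: add_less_cancel_right)
          qed
          also have "\<dots> \<longleftrightarrow> P i \<or> (R i \<and> \<not> R (i + 1))" by (rule ldes_core[OF gP gQ JX R_def gR])
          finally have "i \<in> ldes n F \<longleftrightarrow> P i \<or> (R i \<and> \<not> R (i + 1))" unfolding ld using iS by simp
          moreover have "P i \<longleftrightarrow> i \<in> I" unfolding P_def using inP_Sset[OF iS] by simp
          moreover have "R i \<longleftrightarrow> i \<in> Y" using YR[of i] inP_Sset[OF iS] by simp
          moreover have "R (i + 1) \<longleftrightarrow> (i + 1) mod int n \<in> Y" using YR[of "i+1"] unfolding inP_def by simp
          ultimately show ?thesis by auto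
        qed
        moreover have "ldes n F \<subseteq> Sset n" unfolding ldes_def by auto
        moreover have "I \<union> {y \<in> Y. (y + 1) mod int n \<notin> Y} \<subseteq> Sset n" using I YS by auto
        ultimately show "ldes n (hX n Y \<circ> longest n J) = I \<union> {y \<in> Y. (y + 1) mod int n \<notin> Y}"
          unfolding vF by blast
      qed
    qed
  qed
qed

end
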